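(* Let $M/K$ be a finite Galois extension inside $\bar K$. Then $M/K$ is obtained by nontrivial strong cluster magnification from some subextension $L/K$ if and only if ${\rm Gal}(M/K)\cong A\times B$ for nontrivial groups $A$ and $B$ with $|A|>2$. If this happens, then $L/K$ is also Galois.
   Context: $K$ is a perfect field with a fixed algebraic closure $\bar K$; all extensions are finite and contained in $\bar K$. For a finite extension $L/K$, $\tilde L$ denotes its Galois closure in $\bar K$. Definition: $M/K$ is obtained by strong cluster magnification from a subextension $L/K$ (with $K\subseteq L\subseteq M$) if $[L:K]>2$, and there is a finite Galois extension $F/K$ with $\tilde L$ and $F$ linearly disjoint over $K$ and $LF=M$. The magnification is nontrivial if $F\neq K$. *)

theory Defs
  imports "HOL-Algebra.Algebraic_Closure" "HOL-Algebra.Bij" "HOL-Algebra.Generated_Fields"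
begin

text \<open>Ambient setting: R is an algebraic closure of the subfield K (locale algebraic_closure);
all extensions of K are subfields of R containing K.\<close>

definition perfect_subfield :: "('a, 'b) ring_scheme \<Rightarrow> 'a set \<Rightarrow> bool" where
  "perfect_subfield R K \<longleftrightarrow>
     (\<forall>p::nat. 1 < p \<and> [p] \<cdot>\<^bsub>R\<^esub> \<one>\<^bsub>R\<^esub> = \<zero>\<^bsub>R\<^esub>
        \<and> (\<forall>m. 0 < m \<and> m < p \<longrightarrow> [m] \<cdot>\<^bsub>R\<^esub> \<one>\<^bsub>R\<^esub> \<noteq> \<zero>\<^bsub>R\<^esub>)
        \<longrightarrow> (\<forall>x\<in>K. \<exists>y\<in>K. y [^]\<^bsub>R\<^esub> p = x))"

definition finite_ext :: "('a, 'b) ring_scheme \<Rightarrow> 'a set \<Rightarrow> 'a set \<Rightarrow> bool" where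
  "finite_ext R K L \<longleftrightarrow> subfield L R \<and> K \<subseteq> L \<and> ring.finite_dimension R K L"

definition degree_ext :: "('a, 'b) ring_scheme \<Rightarrow> 'a set \<Rightarrow> 'a set \<Rightarrow> nat" where
  "degree_ext R K L = ring.dim R K L"

definition Gal :: "('a, 'b) ring_scheme \<Rightarrow> 'a set \<Rightarrow> 'a set \<Rightarrow> ('a \<Rightarrow> 'a) monoid" where
  "Gal R K L = (BijGroup L)\<lparr>carrier :=
     {\<sigma> \<in> Bij L. \<sigma> \<in> ring_hom (R\<lparr>carrier := L\<rparr>) (R\<lparr>carrier := L\<rparr>) \<and> (\<forall>k\<in>K. \<sigma> k = k)}\<rparr>"

definition galois :: "('a, 'b) ring_scheme \<Rightarrow> 'a set \<Rightarrow> 'a set \<Rightarrow> bool" where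
  "galois R K L \<longleftrightarrow> finite_ext R K L \<and> card (carrier (Gal R K L)) = degree_ext R K L"

definition galois_closure :: "('a, 'b) ring_scheme \<Rightarrow> 'a set \<Rightarrow> 'a set \<Rightarrow> 'a set" where
  "galois_closure R K L = \<Inter> {N. galois R K N \<and> L \<subseteq> N}"

definition lin_disjoint :: "('a, 'b) ring_scheme \<Rightarrow> 'a set \<Rightarrow> 'a set \<Rightarrow> 'a set \<Rightarrow> bool" where
  "lin_disjoint R K A B \<longleftrightarrow>
     (\<forall>us. set us \<subseteq> A \<and> ring.independent R K us \<longrightarrow> ring.independent R B us)"

definition compositum :: "('a, 'b) ring_scheme \<Rightarrow> 'a set \<Rightarrow> 'a set \<Rightarrow> 'a set" where
  "compositum R L F = generate_field R (L \<union> F)"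

definition strong_cluster_magnification_via ::
  "('a, 'b) ring_scheme \<Rightarrow> 'a set \<Rightarrow> 'a set \<Rightarrow> 'a set \<Rightarrow> 'a set \<Rightarrow> bool" where
  "strong_cluster_magnification_via R K L M F \<longleftrightarrow>
     finite_ext R K L \<and> L \<subseteq> M \<and> degree_ext R K L > 2 \<and>
     galois R K F \<and> lin_disjoint R K (galois_closure R K L) F \<and> compositum R L F = M"

definition nontrivial_strong_cluster_magnification ::
  "('a, 'b) ring_scheme \<Rightarrow> 'a set \<Rightarrow> 'a set \<Rightarrow> 'a set \<Rightarrow> bool" where
  "nontrivial_strong_cluster_magnification R K L M \<longleftrightarrow>
     (\<exists>F. strong_cluster_magnification_via R K L M F \<and> F \<noteq> K)"

end

theory Submission
  imports Defs "HOL-Algebra.Elementary_Groups"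
begin

context field
begin

lemma finsum_lessThan_Suc:
  fixes n :: nat
  assumes "\<And>j. j < Suc n \<Longrightarrow> f j \<in> carrier R"
  shows "(\<Oplus>j\<in>{..<Suc n}. f j) = f n \<oplus> (\<Oplus>j\<in>{..<n}. f j)"
proof -
  have "{..<Suc n} = insert n {..<n}" by auto
  then show ?thesis using assms by (simp add: finsum_insert Pi_def)
qed

lemma finsum_in_subring:
  fixes n :: nat
  assumes "subring S R" "\<And>j. j < n \<Longrightarrow> f j \<in> S"
  shows "(\<Oplus>j\<in>{..<n}. f j) \<in> S"
  using assms(2)
proof (induct n)
  case 0 then show ?case using subringE(2)[OF assms(1)] by simp
next
  case (Suc n)
  have c: "\<And>j. j < Suc n \<Longrightarrow> f j \<in> carrier R" using Suc(2) subringE(1)[OF assms(1)] by blast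
  show ?case
    using Suc subringE(7)[OF assms(1)] finsum_lessThan_Suc[OF c] by simp
qed

lemma lin_sys:
  assumes S: "subfield S R"
  shows "(m::nat) < k \<Longrightarrow> (\<forall>i<m. \<forall>j<k. a i j \<in> S) \<Longrightarrow>
    \<exists>x. (\<forall>j<k. x j \<in> S) \<and> (\<exists>j<k. x j \<noteq> \<zero>) \<and> (\<forall>i<m. (\<Oplus>j\<in>{..<k}. a i j \<otimes> x j) = \<zero>)"
proof (induct m arbitrary: k a)
  case 0
  then show ?case using subringE(3)[OF subfieldE(1)[OF S]] by (intro exI[of _ "\<lambda>j. \<one>"]) auto
next
  case (Suc m)
  have SR: "S \<subseteq> carrier R" using subfieldE(3)[OF S] .
  have sr: "subring S R" using subfieldE(1)[OF S] .
  obtain k' where k: "k = Suc k'" using Suc(2) by (cases k) auto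
  have mk: "m < k'" using Suc(2) k by simp
  have aS: "\<And>i j. i < Suc m \<Longrightarrow> j < k \<Longrightarrow> a i j \<in> S" using Suc(3) by blast
  have aC: "\<And>i j. i < Suc m \<Longrightarrow> j < k \<Longrightarrow> a i j \<in> carrier R" using aS SR by blast
  show ?case
  proof (cases "\<forall>i<Suc m. a i k' = \<zero>")
    case True
    define x where "x = (\<lambda>j. if j = k' then \<one> else \<zero>)"
    have "(\<Oplus>j\<in>{..<k}. a i j \<otimes> x j) = \<zero>" if i: "i < Suc m" for i
    proof -
      have "(\<Oplus>j\<in>{..<k}. a i j \<otimes> x j) = a i k' \<otimes> x k' \<oplus> (\<Oplus>j\<in>{..<k'}. a i j \<otimes> x j)"
        unfolding k by (rule finsum_lessThan_Suc) (use aC i k x_def in auto)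
      also have "(\<Oplus>j\<in>{..<k'}. a i j \<otimes> x j) = (\<Oplus>j\<in>{..<k'}. \<zero>)"
        by (rule finsum_cong') (use aC i k x_def in auto)
      finally show ?thesis using True i x_def by simp
    qed
    moreover have "\<forall>j<k. x j \<in> S" using subringE(2,3)[OF sr] x_def by auto
    moreover have "x k' \<noteq> \<zero>" using x_def by simp
    ultimately show ?thesis using k by blast
  next
    case False
    then obtain i0 where i0: "i0 < Suc m" "a i0 k' \<noteq> \<zero>" by blast
    define p where "p = a i0 k'"
    have pS: "p \<in> S" using aS i0 k p_def by simp
    have pC: "p \<in> carrier R" using pS SR by blast
    have ipS: "inv p \<in> S" using subfield_m_inv(1)[OF S, of p] pS i0 p_def by simp
    have ipC: "inv p \<in> carrier R" using ipS SR by blast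
    define r where "r = (\<lambda>i::nat. if i < i0 then i else Suc i)"
    have r: "\<And>i. i < m \<Longrightarrow> r i < Suc m \<and> r i \<noteq> i0" using r_def by auto
    define a' where "a' = (\<lambda>i c. a (r i) c \<ominus> a (r i) k' \<otimes> inv p \<otimes> a i0 c)"
    have a'S: "\<forall>i<m. \<forall>j<k'. a' i j \<in> S"
    proof (intro allI impI)
      fix i j assume "i < m" "j < k'"
      then have "a (r i) j \<in> S" "a (r i) k' \<in> S" "a i0 j \<in> S" using aS r i0 k by auto
      then show "a' i j \<in> S" unfolding a'_def
        using subringE(5,6,7)[OF sr] ipS by (simp add: a_minus_def)
    qed
    obtain y where y: "\<forall>j<k'. y j \<in> S" "\<exists>j<k'. y j \<noteq> \<zero>"
      "\<forall>i<m. (\<Oplus>j\<in>{..<k'}. a' i j \<otimes> y j) = \<zero>"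
      using Suc(1)[OF mk a'S] by blast
    have yC: "\<And>j. j < k' \<Longrightarrow> y j \<in> carrier R" using y(1) SR by blast
    define T where "T = (\<lambda>i. \<Oplus>j\<in>{..<k'}. a i j \<otimes> y j)"
    have TC: "\<And>i. i < Suc m \<Longrightarrow> T i \<in> carrier R"
      unfolding T_def by (rule finsum_closed) (use aC yC k in auto)
    define s where "s = T i0"
    have sS: "s \<in> S" unfolding s_def T_def
      by (rule finsum_in_subring[OF sr]) (use aS y(1) i0 k subringE(6)[OF sr] in auto)
    have sC: "s \<in> carrier R" using sS SR by blast
    define x where "x = (\<lambda>j. if j < k' then y j else \<ominus> (inv p \<otimes> s))"
    have xS: "\<forall>j<k. x j \<in> S" using y(1) k x_def subringE(5,6)[OF sr] ipS sS by auto
    have xnz: "\<exists>j<k. x j \<noteq> \<zero>" using y(2) k x_def by auto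
    have main: "(\<Oplus>j\<in>{..<k}. a i j \<otimes> x j) = \<ominus> (a i k' \<otimes> inv p \<otimes> s) \<oplus> T i" if i: "i < Suc m" for i
    proof -
      have "(\<Oplus>j\<in>{..<k}. a i j \<otimes> x j) = a i k' \<otimes> x k' \<oplus> (\<Oplus>j\<in>{..<k'}. a i j \<otimes> x j)"
        unfolding k by (rule finsum_lessThan_Suc) (use aC i k xS SR in auto)
      also have "(\<Oplus>j\<in>{..<k'}. a i j \<otimes> x j) = T i"
        unfolding T_def by (rule finsum_cong') (use aC i k x_def yC in auto)
      also have "a i k' \<otimes> x k' = \<ominus> (a i k' \<otimes> inv p \<otimes> s)"
        using x_def aC[OF i, of k'] k ipC sC by (simp add: r_minus m_assoc)
      finally show ?thesis .
    qed
    have "(\<Oplus>j\<in>{..<k}. a i j \<otimes> x j) = \<zero>" if i: "i < Suc m" for i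
    proof (cases "i = i0")
      case True
      have "a i k' \<otimes> inv p \<otimes> s = s" using True p_def i0 pC sC
        by (simp add: field_Units)
      then show ?thesis using main[OF i] True sC s_def by (simp add: l_neg)
    next
      case False
      define i' where "i' = (if i < i0 then i else i - 1)"
      have i': "i' < m" "r i' = i" using False i i0(1) r_def i'_def by auto
      have "\<zero> = (\<Oplus>j\<in>{..<k'}. a' i' j \<otimes> y j)" using y(3) i' by simp
      also have "\<dots> = (\<Oplus>j\<in>{..<k'}. a i j \<otimes> y j \<oplus> (\<ominus> (a i k' \<otimes> inv p)) \<otimes> (a i0 j \<otimes> y j))"
        by (rule finsum_cong') (use i' aC i i0 k ipC yC a'_def in \<open>auto simp: a_minus_def l_distr m_assoc l_minus\<close>)
      also have "\<dots> = T i \<oplus> (\<Oplus>j\<in>{..<k'}. (\<ominus> (a i k' \<otimes> inv p)) \<otimes> (a i0 j \<otimes> y j))"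
        unfolding T_def by (rule finsum_addf) (use aC i i0 k ipC yC in auto)
      also have "(\<Oplus>j\<in>{..<k'}. (\<ominus> (a i k' \<otimes> inv p)) \<otimes> (a i0 j \<otimes> y j)) = (\<ominus> (a i k' \<otimes> inv p)) \<otimes> s"
        unfolding s_def T_def by (rule finsum_rdistr[symmetric]) (use aC i i0 k ipC yC in auto)
      also have "T i \<oplus> (\<ominus> (a i k' \<otimes> inv p)) \<otimes> s = T i \<ominus> (a i k' \<otimes> inv p) \<otimes> s"
        using aC[OF i, of k'] k ipC sC by (simp add: a_minus_def l_minus)
      finally have "T i \<ominus> (a i k' \<otimes> inv p) \<otimes> s = \<zero>" by simp
      then show ?thesis using main[OF i] TC[OF i] aC[OF i, of k'] k ipC sC
        by (simp add: a_minus_def a_comm)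
    qed
    then show ?thesis using xS xnz by blast
  qed
qed

end

definition emb :: "('a, 'b) ring_scheme \<Rightarrow> 'a set \<Rightarrow> 'a set \<Rightarrow> ('a \<Rightarrow> 'a) \<Rightarrow> bool" where
  "emb R K E sg \<longleftrightarrow> sg \<in> ring_hom (R\<lparr>carrier := E\<rparr>) R \<and> (\<forall>k\<in>K. sg k = k)"

context field
begin

lemma hom_sub_closed:
  assumes "subfield E R" "sg \<in> ring_hom (R\<lparr>carrier := E\<rparr>) R" "v \<in> E"
  shows "sg v \<in> carrier R"
  using ring_hom_closed[OF assms(2)] assms(3) by simp

lemma hom_sub_add:
  assumes "subfield E R" "sg \<in> ring_hom (R\<lparr>carrier := E\<rparr>) R" "v \<in> E" "w \<in> E"
  shows "sg (v \<oplus> w) = sg v \<oplus> sg w"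
  using ring_hom_add[OF assms(2)] assms(3,4) by simp

lemma hom_sub_mult:
  assumes "subfield E R" "sg \<in> ring_hom (R\<lparr>carrier := E\<rparr>) R" "v \<in> E" "w \<in> E"
  shows "sg (v \<otimes> w) = sg v \<otimes> sg w"
  using ring_hom_mult[OF assms(2)] assms(3,4) by simp

lemma hom_sub_one:
  assumes "subfield E R" "sg \<in> ring_hom (R\<lparr>carrier := E\<rparr>) R"
  shows "sg \<one> = \<one>"
  using ring_hom_one[OF assms(2)] by simp

lemma hom_sub_zero:
  assumes "subfield E R" "sg \<in> ring_hom (R\<lparr>carrier := E\<rparr>) R"
  shows "sg \<zero> = \<zero>"
proof -
  have "ring (R\<lparr>carrier := E\<rparr>)"
    using subring_is_ring[OF subfieldE(1)[OF assms(1)]] by simp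
  then show ?thesis using ring_hom_zero[OF assms(2)] is_ring by simp
qed

lemma hom_sub_neg:
  assumes "subfield E R" "sg \<in> ring_hom (R\<lparr>carrier := E\<rparr>) R" "v \<in> E"
  shows "sg (\<ominus> v) = \<ominus> sg v"
proof -
  have ES: "E \<subseteq> carrier R" using subfieldE(3)[OF assms(1)] .
  have nv: "\<ominus> v \<in> E" using subringE(5)[OF subfieldE(1)[OF assms(1)]] assms(3) .
  have "sg (\<ominus> v) \<oplus> sg v = sg (\<ominus> v \<oplus> v)" using hom_sub_add[OF assms(1,2) nv assms(3)] by simp
  also have "\<dots> = \<zero>" using ES assms(3) l_neg hom_sub_zero[OF assms(1,2)] by auto
  finally show ?thesis
    using hom_sub_closed[OF assms(1,2)] nv assms(3) by (metis minus_equality)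
qed

lemma hom_sub_minus:
  assumes "subfield E R" "sg \<in> ring_hom (R\<lparr>carrier := E\<rparr>) R" "v \<in> E" "w \<in> E"
  shows "sg (v \<ominus> w) = sg v \<ominus> sg w"
proof -
  have nw: "\<ominus> w \<in> E" using subringE(5)[OF subfieldE(1)[OF assms(1)]] assms(4) .
  show ?thesis unfolding a_minus_def
    using hom_sub_add[OF assms(1,2) assms(3) nw] hom_sub_neg[OF assms(1,2,4)] by simp
qed

lemma hom_sub_inj:
  assumes "subfield E R" "sg \<in> ring_hom (R\<lparr>carrier := E\<rparr>) R" "v \<in> E" "w \<in> E" "sg v = sg w"
  shows "v = w"
proof (rule ccontr)
  assume ne: "v \<noteq> w"
  have ES: "E \<subseteq> carrier R" using subfieldE(3)[OF assms(1)] .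
  have d: "v \<ominus> w \<in> E" using subringE(5,7)[OF subfieldE(1)[OF assms(1)]] assms(3,4)
    by (simp add: a_minus_def)
  have dnz: "v \<ominus> w \<noteq> \<zero>" using ne ES assms(3,4) by (metis r_right_minus_eq subsetD)
  obtain i where i: "i \<in> E" "(v \<ominus> w) \<otimes> i = \<one>"
    using subfield_m_inv(1,2)[OF assms(1), of "v \<ominus> w"] d dnz by blast
  have "sg ((v \<ominus> w) \<otimes> i) = (sg v \<ominus> sg w) \<otimes> sg i"
    using hom_sub_mult[OF assms(1,2) d i(1)] hom_sub_minus[OF assms(1,2,3,4)] by simp
  also have "\<dots> = \<zero>" using assms(5) hom_sub_closed[OF assms(1,2)] assms(3,4) i(1) by (simp add: a_minus_def r_neg)
  finally show False using i(2) hom_sub_one[OF assms(1,2)] by simp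
qed

lemma finsum_lessThan_shift:
  fixes n :: nat
  assumes "\<And>j. j < Suc n \<Longrightarrow> f j \<in> carrier R"
  shows "(\<Oplus>j\<in>{..<Suc n}. f j) = f 0 \<oplus> (\<Oplus>j\<in>{..<n}. f (Suc j))"
proof -
  have e: "{..<Suc n} = insert 0 (Suc ` {..<n})" by (auto simp: image_iff less_Suc_eq_0_disj)
  have "(\<Oplus>j\<in>{..<Suc n}. f j) = f 0 \<oplus> (\<Oplus>j\<in>Suc ` {..<n}. f j)"
    unfolding e by (rule finsum_insert) (use assms in auto)
  also have "(\<Oplus>j\<in>Suc ` {..<n}. f j) = (\<Oplus>j\<in>{..<n}. f (Suc j))"
    by (subst finsum_reindex) (use assms in \<open>auto simp: o_def\<close>)
  finally show ?thesis .
qed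

lemma combine_finsum:
  "set Ks \<subseteq> carrier R \<Longrightarrow> set Us \<subseteq> carrier R \<Longrightarrow> length Ks = length Us \<Longrightarrow>
   combine Ks Us = (\<Oplus>j\<in>{..<length Us}. Ks ! j \<otimes> Us ! j)"
proof (induct Us arbitrary: Ks)
  case Nil then show ?case by simp
next
  case (Cons u Us)
  then obtain k Ks' where K: "Ks = k # Ks'" by (cases Ks) auto
  have c: "\<And>j. j < Suc (length Us) \<Longrightarrow> Ks ! j \<otimes> (u # Us) ! j \<in> carrier R"
    using Cons(2,3,4) by (auto intro!: m_closed simp: set_conv_nth)
  show ?case
    using finsum_lessThan_shift[OF c] Cons K by simp
qed

lemma min_supp:
  fixes k :: nat
  assumes "P x0" "\<exists>j<k. x0 j \<noteq> \<zero>"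
  shows "\<exists>x. P x \<and> (\<exists>j<k. x j \<noteq> \<zero>) \<and>
     (\<forall>y. P y \<and> {j. j < k \<and> y j \<noteq> \<zero>} \<subset> {j. j < k \<and> x j \<noteq> \<zero>} \<longrightarrow> (\<forall>j<k. y j = \<zero>))"
proof -
  let ?Q = "\<lambda>x. P x \<and> (\<exists>j<k. x j \<noteq> \<zero>)"
  let ?c = "\<lambda>x. card {j. j < k \<and> x j \<noteq> \<zero>}"
  obtain x where x: "?Q x" "\<And>y. ?Q y \<Longrightarrow> ?c x \<le> ?c y"
    using ex_has_least_nat[of ?Q x0 ?c] assms by blast
  have "\<forall>y. P y \<and> {j. j < k \<and> y j \<noteq> \<zero>} \<subset> {j. j < k \<and> x j \<noteq> \<zero>} \<longrightarrow> (\<forall>j<k. y j = \<zero>)"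
  proof (rule allI, rule impI)
    fix y assume y: "P y \<and> {j. j < k \<and> y j \<noteq> \<zero>} \<subset> {j. j < k \<and> x j \<noteq> \<zero>}"
    have "?c y < ?c x" using y by (intro psubset_card_mono) auto
    then show "\<forall>j<k. y j = \<zero>" using x(2)[of y] y by force
  qed
  then show ?thesis using x(1) by blast
qed

end

context field
begin

lemma lin_fun_subalgebra:
  assumes K: "subfield K R" and E: "subfield E R" and KE: "K \<subseteq> E"
    and f: "\<And>v. v \<in> E \<Longrightarrow> f v \<in> carrier R"
    and add: "\<And>v w. v \<in> E \<Longrightarrow> w \<in> E \<Longrightarrow> f (v \<oplus> w) = f v \<oplus> f w"
    and sc: "\<And>c v. c \<in> K \<Longrightarrow> v \<in> E \<Longrightarrow> f (c \<otimes> v) = c \<otimes> f v"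
  shows "subalgebra K {v \<in> E. f v = \<zero>} R"
proof -
  have ES: "E \<subseteq> carrier R" using subfieldE(3)[OF E] .
  have KS: "K \<subseteq> carrier R" using subfieldE(3)[OF K] .
  note Ep = subringE[OF subfieldE(1)[OF E]]
  note Kp = subringE[OF subfieldE(1)[OF K]]
  have z: "f \<zero> = \<zero>" using sc[of \<zero> \<zero>] Kp(2) Ep(2) f[of \<zero>] by simp
  have sub: "subgroup {v \<in> E. f v = \<zero>} (add_monoid R)"
  proof (rule add.subgroupI)
    show "{v \<in> E. f v = \<zero>} \<subseteq> carrier R" using ES by auto
    show "{v \<in> E. f v = \<zero>} \<noteq> {}" using z Ep(2) by auto
    fix a assume a: "a \<in> {v \<in> E. f v = \<zero>}"
    have e: "\<ominus> a = (\<ominus> \<one>) \<otimes> a" using a ES by (simp add: l_minus subsetD)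
    have "\<ominus> \<one> \<in> K" using Kp(3,5) by simp
    then have "f (\<ominus> a) = \<zero>" using e a sc[of "\<ominus> \<one>" a] by simp
    then show "\<ominus> a \<in> {v \<in> E. f v = \<zero>}"
      using a Ep(5)[of a] by simp
  next
    fix a b assume "a \<in> {v \<in> E. f v = \<zero>}" "b \<in> {v \<in> E. f v = \<zero>}"
    then show "a \<oplus> b \<in> {v \<in> E. f v = \<zero>}" using add Ep(7) by simp
  qed
  show ?thesis
    unfolding subalgebra_def subalgebra_axioms_def
  proof (intro conjI sub allI impI)
    fix k v assume "k \<in> K" "v \<in> {v \<in> E. f v = \<zero>}"
    then show "k \<otimes> v \<in> {v \<in> E. f v = \<zero>}" using sc KE Ep(6) KS by auto
  qed
qed

lemma vanish_on_basis:
  assumes K: "subfield K R" and E: "subfield E R" and KE: "K \<subseteq> E"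
    and Us: "set Us \<subseteq> E" "Span K Us = E"
    and f: "\<And>v. v \<in> E \<Longrightarrow> f v \<in> carrier R"
    and add: "\<And>v w. v \<in> E \<Longrightarrow> w \<in> E \<Longrightarrow> f (v \<oplus> w) = f v \<oplus> f w"
    and sc: "\<And>c v. c \<in> K \<Longrightarrow> v \<in> E \<Longrightarrow> f (c \<otimes> v) = c \<otimes> f v"
    and van: "\<And>u. u \<in> set Us \<Longrightarrow> f u = \<zero>"
    and v: "v \<in> E"
  shows "f v = \<zero>"
proof -
  have "Span K Us \<subseteq> {v \<in> E. f v = \<zero>}"
    by (rule subalgebra_Span_incl[OF K lin_fun_subalgebra[OF K E KE f add sc]]) (use Us van in auto)
  then show "f v = \<zero>" using Us(2) v by auto
qed

lemma dedekind_bound_list: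
  fixes k :: nat and sg :: "nat \<Rightarrow> 'a \<Rightarrow> 'a"
  assumes K: "subfield K R" and E: "subfield E R" and KE: "K \<subseteq> E" and dim: "dimension n K E"
    and em: "\<And>j. j < k \<Longrightarrow> emb R K E (sg j)"
    and dist: "\<And>a b. a < k \<Longrightarrow> b < k \<Longrightarrow> a \<noteq> b \<Longrightarrow> \<exists>y\<in>E. sg a y \<noteq> sg b y"
  shows "k \<le> n"
proof (rule ccontr)
  assume "\<not> k \<le> n" then have nk: "n < k" by simp
  have ES: "E \<subseteq> carrier R" using subfieldE(3)[OF E] .
  note Ep = subringE[OF subfieldE(1)[OF E]]
  have hom: "\<And>j. j < k \<Longrightarrow> sg j \<in> ring_hom (R\<lparr>carrier := E\<rparr>) R" using em by (simp add: emb_def)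
  have fixK: "\<And>j c. j < k \<Longrightarrow> c \<in> K \<Longrightarrow> sg j c = c" using em by (simp add: emb_def)
  have sgC: "\<And>j v. j < k \<Longrightarrow> v \<in> E \<Longrightarrow> sg j v \<in> carrier R" using hom_sub_closed[OF E hom] by blast
  obtain Us where Us: "set Us \<subseteq> carrier R" "independent K Us" "length Us = n" "Span K Us = E"
    using exists_base[OF K dim] by blast
  have UsE: "set Us \<subseteq> E" using Span_base_incl[OF K Us(1)] Us(4) by simp
  define P where "P = (\<lambda>x. (\<forall>j<k. x j \<in> carrier R) \<and> (\<forall>v\<in>E. (\<Oplus>j\<in>{..<k}. x j \<otimes> sg j v) = \<zero>))"
  have key: "\<forall>v\<in>E. (\<Oplus>j\<in>{..<k}. x j \<otimes> sg j v) = \<zero>"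
    if xC: "\<forall>j<k. x j \<in> carrier R" and xU: "\<forall>u\<in>set Us. (\<Oplus>j\<in>{..<k}. x j \<otimes> sg j u) = \<zero>" for x
  proof -
    let ?f = "\<lambda>v. (\<Oplus>j\<in>{..<k}. x j \<otimes> sg j v)"
    have "?f v = \<zero>" if v: "v \<in> E" for v
    proof (rule vanish_on_basis[OF K E KE UsE Us(4), where f = ?f and v = v])
      show "v \<in> E" by (rule v)
    next
      show "\<And>v. v \<in> E \<Longrightarrow> ?f v \<in> carrier R" using xC sgC by (auto intro!: finsum_closed)
      show "\<And>u. u \<in> set Us \<Longrightarrow> ?f u = \<zero>" using xU by blast
    next
      fix v w assume vw: "v \<in> E" "w \<in> E"
      have "?f (v \<oplus> w) = (\<Oplus>j\<in>{..<k}. x j \<otimes> sg j v \<oplus> x j \<otimes> sg j w)"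
        by (rule finsum_cong') (use vw xC sgC hom_sub_add[OF E hom] in \<open>auto simp: r_distr\<close>)
      also have "\<dots> = ?f v \<oplus> ?f w"
        by (rule finsum_addf) (use vw xC sgC in auto)
      finally show "?f (v \<oplus> w) = ?f v \<oplus> ?f w" .
    next
      fix c v assume cv: "c \<in> K" "v \<in> E"
      have cC: "c \<in> carrier R" "c \<in> E" using cv KE ES by auto
      have "?f (c \<otimes> v) = (\<Oplus>j\<in>{..<k}. c \<otimes> (x j \<otimes> sg j v))"
      proof (rule finsum_cong')
        fix j assume "j \<in> {..<k}"
        then have jk: "j < k" by simp
        show "x j \<otimes> sg j (c \<otimes> v) = c \<otimes> (x j \<otimes> sg j v)"
          using hom_sub_mult[OF E hom[OF jk] cC(2) cv(2)] fixK[OF jk cv(1)]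
            m_lcomm[OF xC[rule_format, OF jk] cC(1) sgC[OF jk cv(2)]] by simp
      next
        show "(\<lambda>j. c \<otimes> (x j \<otimes> sg j v)) \<in> {..<k} \<rightarrow> carrier R" using cC xC sgC cv by auto
      qed simp
      also have "\<dots> = c \<otimes> ?f v"
        by (rule finsum_rdistr[symmetric]) (use cv cC xC sgC in auto)
      finally show "?f (c \<otimes> v) = c \<otimes> ?f v" .
    qed
    then show ?thesis by blast
  qed
  obtain x0 where x0: "\<forall>j<k. x0 j \<in> carrier R" "\<exists>j<k. x0 j \<noteq> \<zero>"
      "\<forall>i<n. (\<Oplus>j\<in>{..<k}. sg j (Us ! i) \<otimes> x0 j) = \<zero>"
  proof -
    have "\<forall>i<n. \<forall>j<k. sg j (Us ! i) \<in> carrier R"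
    proof (intro allI impI)
      fix i j assume "i < n" "j < k"
      then show "sg j (Us ! i) \<in> carrier R" using sgC UsE Us(3) nth_mem[of i Us] by blast
    qed
    from lin_sys[OF carrier_is_subfield nk this] show ?thesis using that by blast
  qed
  have "P x0"
    unfolding P_def
  proof (intro conjI key)
    show "\<forall>j<k. x0 j \<in> carrier R" by fact
    show "\<forall>u\<in>set Us. (\<Oplus>j\<in>{..<k}. x0 j \<otimes> sg j u) = \<zero>"
    proof
      fix u assume u: "u \<in> set Us"
      then obtain i where i: "i < n" "u = Us ! i" using Us(3) by (metis in_set_conv_nth)
      have "(\<Oplus>j\<in>{..<k}. x0 j \<otimes> sg j u) = (\<Oplus>j\<in>{..<k}. sg j (Us ! i) \<otimes> x0 j)"
      proof (rule finsum_cong')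
        fix j assume "j \<in> {..<k}"
        then have jk: "j < k" by simp
        have uE: "u \<in> E" using u UsE by blast
        show "x0 j \<otimes> sg j u = sg j (Us ! i) \<otimes> x0 j"
          using m_comm[OF x0(1)[rule_format, OF jk] sgC[OF jk uE]] i(2) by simp
      next
        show "(\<lambda>j. sg j (Us ! i) \<otimes> x0 j) \<in> {..<k} \<rightarrow> carrier R"
          using x0(1) sgC u UsE i by auto
      qed simp
      then show "(\<Oplus>j\<in>{..<k}. x0 j \<otimes> sg j u) = \<zero>" using x0(3) i by simp
    qed
  qed (use x0 in auto)
  obtain x where x: "P x" "\<exists>j<k. x j \<noteq> \<zero>"
    "\<And>y. P y \<and> {j. j < k \<and> y j \<noteq> \<zero>} \<subset> {j. j < k \<and> x j \<noteq> \<zero>} \<Longrightarrow> (\<forall>j<k. y j = \<zero>)"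
    using min_supp[of P x0 k] \<open>P x0\<close> x0(2) by blast
  have xC: "\<And>j. j < k \<Longrightarrow> x j \<in> carrier R" using x(1) P_def by blast
  obtain a where a: "a < k" "x a \<noteq> \<zero>" using x(2) by blast
  define c where "c = inv (x a)"
  have cC: "c \<in> carrier R" "c \<otimes> x a = \<one>" "c \<noteq> \<zero>"
    using a xC[OF a(1)] c_def field_Units by auto
  define z where "z = (\<lambda>j. c \<otimes> x j)"
  have zC: "\<And>j. j < k \<Longrightarrow> z j \<in> carrier R" using z_def cC xC by simp
  have za: "z a = \<one>" using z_def cC by simp
  have zsupp: "{j. j < k \<and> z j \<noteq> \<zero>} = {j. j < k \<and> x j \<noteq> \<zero>}"
    using z_def cC xC integral_iff by auto
  have Pz: "P z"
    unfolding P_def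
  proof (intro conjI ballI allI impI)
    fix j assume "j < k" then show "z j \<in> carrier R" by (rule zC)
  next
    fix v assume v: "v \<in> E"
    have "(\<Oplus>j\<in>{..<k}. z j \<otimes> sg j v) = c \<otimes> (\<Oplus>j\<in>{..<k}. x j \<otimes> sg j v)"
    proof -
      have "c \<otimes> (\<Oplus>j\<in>{..<k}. x j \<otimes> sg j v) = (\<Oplus>j\<in>{..<k}. c \<otimes> (x j \<otimes> sg j v))"
        by (rule finsum_rdistr) (use cC xC sgC v in auto)
      also have "\<dots> = (\<Oplus>j\<in>{..<k}. z j \<otimes> sg j v)"
        by (rule finsum_cong') (use cC xC sgC v z_def in \<open>auto simp: m_assoc\<close>)
      finally show ?thesis by simp
    qed
    then show "(\<Oplus>j\<in>{..<k}. z j \<otimes> sg j v) = \<zero>" using x(1) v cC unfolding P_def by simp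
  qed
  have only_a: "z b = \<zero>" if b: "b < k" "b \<noteq> a" for b
  proof (rule ccontr)
    assume zb: "z b \<noteq> \<zero>"
    obtain y where y: "y \<in> E" "sg a y \<noteq> sg b y" using dist[OF a(1) b(1)] b(2) by metis
    have yC: "y \<in> carrier R" using y ES by blast
    define w where "w = (\<lambda>j. z j \<otimes> (sg j y \<ominus> sg a y))"
    have wC: "\<And>j. j < k \<Longrightarrow> w j \<in> carrier R" using w_def zC sgC y a by auto
    have Pw: "P w"
      unfolding P_def
    proof (intro conjI ballI allI impI)
      fix j assume "j < k" then show "w j \<in> carrier R" by (rule wC)
    next
      fix v assume v: "v \<in> E"
      have yv: "y \<otimes> v \<in> E" using Ep(6) y v by simp
      have "(\<Oplus>j\<in>{..<k}. w j \<otimes> sg j v)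
          = (\<Oplus>j\<in>{..<k}. z j \<otimes> sg j (y \<otimes> v) \<oplus> (\<ominus> sg a y) \<otimes> (z j \<otimes> sg j v))"
        unfolding w_def
      proof (rule finsum_cong')
        fix j assume j: "j \<in> {..<k}"
        then have jk: "j < k" by simp
        have "z j \<otimes> (sg j y \<ominus> sg a y) \<otimes> sg j v = z j \<otimes> (sg j y \<otimes> sg j v) \<oplus> (\<ominus> sg a y) \<otimes> (z j \<otimes> sg j v)"
          using zC[OF jk] sgC[OF jk y(1)] sgC[OF a(1) y(1)] sgC[OF jk v] by algebra
        then show "z j \<otimes> (sg j y \<ominus> sg a y) \<otimes> sg j v = z j \<otimes> sg j (y \<otimes> v) \<oplus> (\<ominus> sg a y) \<otimes> (z j \<otimes> sg j v)"
          using hom_sub_mult[OF E hom[OF jk] y(1) v] by simp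
      next
        show "(\<lambda>j. z j \<otimes> sg j (y \<otimes> v) \<oplus> (\<ominus> sg a y) \<otimes> (z j \<otimes> sg j v)) \<in> {..<k} \<rightarrow> carrier R"
          using zC sgC y v a yv by auto
      qed simp
      also have "\<dots> = (\<Oplus>j\<in>{..<k}. z j \<otimes> sg j (y \<otimes> v)) \<oplus> (\<Oplus>j\<in>{..<k}. (\<ominus> sg a y) \<otimes> (z j \<otimes> sg j v))"
        by (rule finsum_addf) (use zC sgC y v a yv in auto)
      also have "(\<Oplus>j\<in>{..<k}. (\<ominus> sg a y) \<otimes> (z j \<otimes> sg j v)) = (\<ominus> sg a y) \<otimes> (\<Oplus>j\<in>{..<k}. z j \<otimes> sg j v)"
        by (rule finsum_rdistr[symmetric]) (use zC sgC y v a in auto)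
      finally show "(\<Oplus>j\<in>{..<k}. w j \<otimes> sg j v) = \<zero>"
        using Pz v yv sgC[OF a(1) y(1)] unfolding P_def by simp
    qed
    have "{j. j < k \<and> w j \<noteq> \<zero>} \<subseteq> {j. j < k \<and> x j \<noteq> \<zero>} - {a}"
    proof
      fix j assume j: "j \<in> {j. j < k \<and> w j \<noteq> \<zero>}"
      have "j \<noteq> a"
      proof
        assume "j = a"
        then have "w j = z a \<otimes> \<zero>" using w_def sgC[OF a(1) y(1)] by (simp add: a_minus_def r_neg)
        then show False using j za by simp
      qed
      moreover have "z j \<noteq> \<zero>" using j w_def sgC[OF _ y(1)] sgC[OF a(1) y(1)] by auto
      ultimately show "j \<in> {j. j < k \<and> x j \<noteq> \<zero>} - {a}" using j zsupp by blast
    qed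
    then have "{j. j < k \<and> w j \<noteq> \<zero>} \<subset> {j. j < k \<and> x j \<noteq> \<zero>}" using a by blast
    then have "w b = \<zero>" using x(3)[of w] Pw b by blast
    moreover have "sg b y \<ominus> sg a y \<noteq> \<zero>"
      using y sgC[OF a(1) y(1)] sgC[OF b(1) y(1)] r_right_minus_eq by metis
    moreover have "sg b y \<ominus> sg a y \<in> carrier R" using sgC[OF a(1) y(1)] sgC[OF b(1) y(1)] by simp
    ultimately show False
      using w_def zb zC[OF b(1)] integral_iff by metis
  qed
  have "(\<Oplus>j\<in>{..<k}. z j \<otimes> sg j \<one>) = (\<Oplus>j\<in>{..<k}. if a = j then \<one> else \<zero>)"
    by (rule finsum_cong') (use only_a za hom_sub_one[OF E hom] a in auto)
  also have "\<dots> = \<one>"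
    using finsum_singleton[of a "{..<k}" "\<lambda>j. \<one>"] a by simp
  finally show False using Pz Ep(3) unfolding P_def by auto
qed

lemma dedekind_bound:
  assumes K: "subfield K R" and E: "subfield E R" and KE: "K \<subseteq> E" and dim: "dimension n K E"
    and em: "\<And>s. s \<in> S \<Longrightarrow> emb R K E s"
    and inj: "inj_on (\<lambda>s. restrict s E) S"
  shows "finite S" and "card S \<le> n"
proof -
  have fin_le: "card T \<le> n" if T: "finite T" "T \<subseteq> S" for T
  proof -
    obtain h where h: "bij_betw h {0..<card T} T" using ex_bij_betw_nat_finite[OF T(1)] by blast
    show ?thesis
    proof (rule dedekind_bound_list[OF K E KE dim, of "card T" h])
      fix j assume "j < card T" then show "emb R K E (h j)"
        using h T(2) em bij_betwE by fastforce
    next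
      fix a b assume ab: "a < card T" "b < card T" "a \<noteq> b"
      then have "h a \<noteq> h b" using h by (auto simp: bij_betw_def inj_on_def)
      moreover have "h a \<in> S" "h b \<in> S" using h T(2) ab bij_betwE by fastforce+
      ultimately have "restrict (h a) E \<noteq> restrict (h b) E" using inj by (auto simp: inj_on_def)
      then show "\<exists>y\<in>E. h a y \<noteq> h b y" by (metis restrict_ext)
    qed
  qed
  show "finite S"
  proof (rule ccontr)
    assume "infinite S"
    then obtain T where "finite T" "card T = Suc n" "T \<subseteq> S" using infinite_arbitrarily_large by blast
    then show False using fin_le by fastforce
  qed
  then show "card S \<le> n" using fin_le by blast
qed

end

definition fixf :: "'a set \<Rightarrow> ('a \<Rightarrow> 'a) set \<Rightarrow> 'a set" where
  "fixf M H = {x \<in> M. \<forall>h\<in>H. h x = x}"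

lemma fixfI: "x \<in> M \<Longrightarrow> (\<And>h. h \<in> H \<Longrightarrow> h x = x) \<Longrightarrow> x \<in> fixf M H"
  by (simp add: fixf_def)

lemma carrier_Gal:
  "carrier (Gal R K M) = {s. s \<in> Bij M \<and> s \<in> ring_hom (R\<lparr>carrier := M\<rparr>) (R\<lparr>carrier := M\<rparr>) \<and> (\<forall>k\<in>K. s k = k)}"
  by (simp add: Gal_def BijGroup_def)

lemma mult_Gal:
  "s \<in> carrier (Gal R K M) \<Longrightarrow> t \<in> carrier (Gal R K M) \<Longrightarrow> s \<otimes>\<^bsub>Gal R K M\<^esub> t = compose M s t"
  by (simp add: Gal_def BijGroup_def)

lemma one_Gal: "\<one>\<^bsub>Gal R K M\<^esub> = (\<lambda>x\<in>M. x)"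
  by (simp add: Gal_def BijGroup_def)

lemma Gal_as_sub: "Gal R K M = (BijGroup M)\<lparr>carrier := carrier (Gal R K M)\<rparr>"
  by (simp add: Gal_def)

context field
begin

lemma ring_hom_subI:
  assumes "\<And>x. x \<in> M \<Longrightarrow> s x \<in> M"
    and "\<And>x y. x \<in> M \<Longrightarrow> y \<in> M \<Longrightarrow> s (x \<otimes> y) = s x \<otimes> s y"
    and "\<And>x y. x \<in> M \<Longrightarrow> y \<in> M \<Longrightarrow> s (x \<oplus> y) = s x \<oplus> s y"
    and "s \<one> = \<one>"
  shows "s \<in> ring_hom (R\<lparr>carrier := M\<rparr>) (R\<lparr>carrier := M\<rparr>)"
  using assms by (auto simp: ring_hom_def)

lemma ring_hom_subD:
  assumes "s \<in> ring_hom (R\<lparr>carrier := M\<rparr>) (R\<lparr>carrier := M\<rparr>)"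
  shows "\<And>x. x \<in> M \<Longrightarrow> s x \<in> M"
    and "\<And>x y. x \<in> M \<Longrightarrow> y \<in> M \<Longrightarrow> s (x \<otimes> y) = s x \<otimes> s y"
    and "\<And>x y. x \<in> M \<Longrightarrow> y \<in> M \<Longrightarrow> s (x \<oplus> y) = s x \<oplus> s y"
    and "s \<one> = \<one>"
  using assms by (auto simp: ring_hom_def)

lemma ring_hom_sub_to_R:
  assumes "subfield M R" "s \<in> ring_hom (R\<lparr>carrier := M\<rparr>) (R\<lparr>carrier := M\<rparr>)"
  shows "s \<in> ring_hom (R\<lparr>carrier := M\<rparr>) R"
proof (rule ring_hom_memI)
  fix x assume "x \<in> carrier (R\<lparr>carrier := M\<rparr>)"
  then show "s x \<in> carrier R" using ring_hom_subD(1)[OF assms(2)] subfieldE(3)[OF assms(1)] by auto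
next
  fix x y assume "x \<in> carrier (R\<lparr>carrier := M\<rparr>)" "y \<in> carrier (R\<lparr>carrier := M\<rparr>)"
  then show "s (x \<otimes>\<^bsub>R\<lparr>carrier := M\<rparr>\<^esub> y) = s x \<otimes> s y"
    and "s (x \<oplus>\<^bsub>R\<lparr>carrier := M\<rparr>\<^esub> y) = s x \<oplus> s y"
    using ring_hom_subD(2,3)[OF assms(2)] by auto
next
  show "s \<one>\<^bsub>R\<lparr>carrier := M\<rparr>\<^esub> = \<one>" using ring_hom_subD(4)[OF assms(2)] by simp
qed

lemma Gal_emb:
  assumes "subfield M R" "s \<in> carrier (Gal R K M)"
  shows "emb R K M s"
  using assms ring_hom_sub_to_R[OF assms(1)] by (auto simp: carrier_Gal emb_def)

lemma Gal_closed:
  assumes "s \<in> carrier (Gal R K M)" "x \<in> M" shows "s x \<in> M"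
  using assms ring_hom_subD(1) by (auto simp: carrier_Gal)

lemma inv_auto_hom:
  assumes M: "subfield M R" and s: "s \<in> Bij M" "s \<in> ring_hom (R\<lparr>carrier := M\<rparr>) (R\<lparr>carrier := M\<rparr>)"
  shows "(\<lambda>x\<in>M. inv_into M s x) \<in> ring_hom (R\<lparr>carrier := M\<rparr>) (R\<lparr>carrier := M\<rparr>)"
proof -
  note Mp = subringE[OF subfieldE(1)[OF M]]
  have bij: "bij_betw s M M" using s(1) by (simp add: Bij_def)
  have inj: "inj_on s M" using bij_betw_imp_inj_on[OF bij] .
  have img: "s ` M = M" using bij_betw_imp_surj_on[OF bij] .
  have ii: "\<And>x. x \<in> M \<Longrightarrow> inv_into M s x \<in> M" using img by (metis inv_into_into)
  have fi: "\<And>x. x \<in> M \<Longrightarrow> s (inv_into M s x) = x" using img by (metis f_inv_into_f)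
  have if': "\<And>x. x \<in> M \<Longrightarrow> inv_into M s (s x) = x" using inj by (metis inv_into_f_f)
  note hs = ring_hom_subD[OF s(2)]
  show ?thesis
  proof (rule ring_hom_subI)
    fix x assume "x \<in> M" then show "(\<lambda>x\<in>M. inv_into M s x) x \<in> M" using ii by simp
  next
    fix x y assume xy: "x \<in> M" "y \<in> M"
    have "s (inv_into M s x \<otimes> inv_into M s y) = x \<otimes> y" using hs(2) ii fi xy by simp
    then have "inv_into M s (x \<otimes> y) = inv_into M s x \<otimes> inv_into M s y"
      using if' Mp(6) ii xy by metis
    then show "(\<lambda>x\<in>M. inv_into M s x) (x \<otimes> y) = (\<lambda>x\<in>M. inv_into M s x) x \<otimes> (\<lambda>x\<in>M. inv_into M s x) y"
      using xy Mp(6) by simp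
  next
    fix x y assume xy: "x \<in> M" "y \<in> M"
    have "s (inv_into M s x \<oplus> inv_into M s y) = x \<oplus> y" using hs(3) ii fi xy by simp
    then have "inv_into M s (x \<oplus> y) = inv_into M s x \<oplus> inv_into M s y"
      using if' Mp(7) ii xy by metis
    then show "(\<lambda>x\<in>M. inv_into M s x) (x \<oplus> y) = (\<lambda>x\<in>M. inv_into M s x) x \<oplus> (\<lambda>x\<in>M. inv_into M s x) y"
      using xy Mp(7) by simp
  next
    show "(\<lambda>x\<in>M. inv_into M s x) \<one> = \<one>" using if'[of \<one>] hs(4) Mp(3) by simp
  qed
qed

lemma Gal_subgroup_Bij:
  assumes M: "subfield M R" and KM: "K \<subseteq> M"
  shows "subgroup (carrier (Gal R K M)) (BijGroup M)"
proof (rule group.subgroupI[OF group_BijGroup])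
  note Mp = subringE[OF subfieldE(1)[OF M]]
  show "carrier (Gal R K M) \<subseteq> carrier (BijGroup M)" by (auto simp: carrier_Gal BijGroup_def)
  have "(\<lambda>x\<in>M. x) \<in> carrier (Gal R K M)"
    using KM id_Bij by (auto simp: carrier_Gal intro!: ring_hom_subI Mp)
  then show "carrier (Gal R K M) \<noteq> {}" by blast
next
  fix s assume s: "s \<in> carrier (Gal R K M)"
  then have sB: "s \<in> Bij M" and sh: "s \<in> ring_hom (R\<lparr>carrier := M\<rparr>) (R\<lparr>carrier := M\<rparr>)"
    and sK: "\<forall>k\<in>K. s k = k" by (auto simp: carrier_Gal)
  have inj: "inj_on s M" using sB unfolding Bij_def by (blast dest: bij_betw_imp_inj_on)
  have "\<forall>k\<in>K. (\<lambda>x\<in>M. inv_into M s x) k = k"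
    using sK KM inj by (metis inv_into_f_f restrict_apply' subsetD)
  then show "inv\<^bsub>BijGroup M\<^esub> s \<in> carrier (Gal R K M)"
    using inv_BijGroup[OF sB] restrict_inv_into_Bij[OF sB] inv_auto_hom[OF M sB sh]
    by (auto simp: carrier_Gal)
next
  fix s t assume st: "s \<in> carrier (Gal R K M)" "t \<in> carrier (Gal R K M)"
  then have B: "s \<in> Bij M" "t \<in> Bij M" by (auto simp: carrier_Gal)
  note Mp = subringE[OF subfieldE(1)[OF M]]
  have "s \<otimes>\<^bsub>BijGroup M\<^esub> t = compose M s t" using B by (simp add: BijGroup_def)
  moreover have "compose M s t \<in> Bij M" using B compose_Bij by blast
  moreover have "compose M s t \<in> ring_hom (R\<lparr>carrier := M\<rparr>) (R\<lparr>carrier := M\<rparr>)"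
    using st ring_hom_subD[of s M] ring_hom_subD[of t M]
    by (intro ring_hom_subI) (auto simp: carrier_Gal compose_def Mp)
  moreover have "\<forall>k\<in>K. compose M s t k = k" using st KM by (auto simp: carrier_Gal compose_def)
  ultimately show "s \<otimes>\<^bsub>BijGroup M\<^esub> t \<in> carrier (Gal R K M)" by (simp add: carrier_Gal)
qed

lemma Gal_group:
  assumes M: "subfield M R" and KM: "K \<subseteq> M"
  shows "group (Gal R K M)"
  using subgroup.subgroup_is_group[OF Gal_subgroup_Bij[OF M KM] group_BijGroup]
  by (simp add: Gal_def)

lemma inv_Gal:
  assumes M: "subfield M R" and KM: "K \<subseteq> M" and s: "s \<in> carrier (Gal R K M)"
  shows "inv\<^bsub>Gal R K M\<^esub> s = (\<lambda>x\<in>M. inv_into M s x)"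
proof -
  have "inv\<^bsub>Gal R K M\<^esub> s = inv\<^bsub>BijGroup M\<^esub> s"
    using group.m_inv_consistent[OF group_BijGroup Gal_subgroup_Bij[OF M KM] s]
    by (simp add: Gal_def)
  also have "\<dots> = (\<lambda>x\<in>M. inv_into M s x)" using s inv_BijGroup by (auto simp: carrier_Gal)
  finally show ?thesis .
qed

lemma Gal_mono:
  assumes "K \<subseteq> E" shows "carrier (Gal R E M) \<subseteq> carrier (Gal R K M)"
  using assms by (auto simp: carrier_Gal)

lemma Gal_sub_subgroup:
  assumes M: "subfield M R" and KE: "K \<subseteq> E" and EM: "E \<subseteq> M"
  shows "subgroup (carrier (Gal R E M)) (Gal R K M)"
proof (rule group.subgroupI[OF Gal_group[OF M]])
  show "K \<subseteq> M" using KE EM by blast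
  show "carrier (Gal R E M) \<subseteq> carrier (Gal R K M)" using Gal_mono[OF KE] .
  show "carrier (Gal R E M) \<noteq> {}" using subgroup.one_closed[OF Gal_subgroup_Bij[OF M EM]] by blast
next
  fix s assume s: "s \<in> carrier (Gal R E M)"
  have sK: "s \<in> carrier (Gal R K M)" using Gal_mono[OF KE] s by blast
  have "inv\<^bsub>Gal R K M\<^esub> s = inv\<^bsub>Gal R E M\<^esub> s"
    using inv_Gal[OF M _ s] inv_Gal[OF M _ sK] KE EM by simp
  then show "inv\<^bsub>Gal R K M\<^esub> s \<in> carrier (Gal R E M)"
    using group.inv_closed[OF Gal_group[OF M EM] s] by simp
next
  fix s t assume st: "s \<in> carrier (Gal R E M)" "t \<in> carrier (Gal R E M)"
  have "s \<otimes>\<^bsub>Gal R K M\<^esub> t = s \<otimes>\<^bsub>Gal R E M\<^esub> t"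
  proof -
    have "s \<in> carrier (Gal R K M)" "t \<in> carrier (Gal R K M)" using Gal_mono[OF KE] st by auto
    then show ?thesis using mult_Gal[of s R K M t] mult_Gal[of s R E M t] st by simp
  qed
  then show "s \<otimes>\<^bsub>Gal R K M\<^esub> t \<in> carrier (Gal R E M)"
    using monoid.m_closed[OF group.is_monoid[OF Gal_group[OF M EM]] st] by simp
qed

lemma fixf_subfield:
  assumes M: "subfield M R" and K: "subfield K R" and KM: "K \<subseteq> M" and H: "H \<subseteq> carrier (Gal R K M)"
  shows "subfield (fixf M H) R" and "K \<subseteq> fixf M H" and "fixf M H \<subseteq> M"
proof -
  note Mp = subringE[OF subfieldE(1)[OF M]]
  have hh: "\<And>h. h \<in> H \<Longrightarrow> h \<in> ring_hom (R\<lparr>carrier := M\<rparr>) R" using H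
    by (auto simp: carrier_Gal intro: ring_hom_sub_to_R[OF M])
  show "K \<subseteq> fixf M H" using H KM by (auto simp: carrier_Gal fixf_def)
  show "fixf M H \<subseteq> M" by (auto simp: fixf_def)
  show "subfield (fixf M H) R"
  proof (rule subfieldI')
    show "subring (fixf M H) R"
    proof (rule subringI)
      show "fixf M H \<subseteq> carrier R" using Mp(1) by (auto simp: fixf_def)
      show "\<one> \<in> fixf M H"
        by (rule fixfI) (use Mp(3) hom_sub_one[OF M hh] in auto)
    next
      fix x assume x: "x \<in> fixf M H"
      then have xM: "x \<in> M" and xf: "\<And>h. h \<in> H \<Longrightarrow> h x = x" by (auto simp: fixf_def)
      show "\<ominus> x \<in> fixf M H"
      proof (rule fixfI)
        fix h assume h: "h \<in> H" show "h (\<ominus> x) = \<ominus> x" using hom_sub_neg[OF M hh[OF h] xM] xf[OF h] by simp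
      qed (use Mp(5)[OF xM] in simp)
    next
      fix x y assume x: "x \<in> fixf M H" and y: "y \<in> fixf M H"
      then have xM: "x \<in> M" and xf: "\<And>h. h \<in> H \<Longrightarrow> h x = x"
        and yM: "y \<in> M" and yf: "\<And>h. h \<in> H \<Longrightarrow> h y = y" by (auto simp: fixf_def)
      show "x \<otimes> y \<in> fixf M H"
      proof (rule fixfI)
        fix h assume h: "h \<in> H" show "h (x \<otimes> y) = x \<otimes> y" using hom_sub_mult[OF M hh[OF h] xM yM] xf[OF h] yf[OF h] by simp
      qed (use Mp(6)[OF xM yM] in simp)
      show "x \<oplus> y \<in> fixf M H"
      proof (rule fixfI)
        fix h assume h: "h \<in> H" show "h (x \<oplus> y) = x \<oplus> y" using hom_sub_add[OF M hh[OF h] xM yM] xf[OF h] yf[OF h] by simp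
      qed (use Mp(7)[OF xM yM] in simp)
    qed
  next
    fix k assume k: "k \<in> fixf M H - {\<zero>}"
    then have kM: "k \<in> M" "k \<noteq> \<zero>" by (auto simp: fixf_def)
    have ik: "inv k \<in> M" "k \<otimes> inv k = \<one>" using subfield_m_inv[OF M, of k] kM by auto
    have "h (inv k) = inv k" if h: "h \<in> H" for h
    proof -
      have "h k \<otimes> h (inv k) = \<one>" using hom_sub_mult[OF M hh[OF h] kM(1) ik(1)] ik(2) hom_sub_one[OF M hh[OF h]] by simp
      moreover have "h k = k" using k h by (simp add: fixf_def)
      ultimately have "k \<otimes> h (inv k) = \<one>" by simp
      then show ?thesis
        using ik kM hom_sub_closed[OF M hh[OF h] ik(1)] subfieldE(3)[OF M]
        by (metis inv_char m_comm subsetD)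
    qed
    then show "inv k \<in> fixf M H" using ik by (auto simp: fixf_def)
  qed
qed

end

context field
begin

lemma finsum_diff:
  fixes k :: nat
  assumes "\<And>j. j < k \<Longrightarrow> f j \<in> carrier R" "\<And>j. j < k \<Longrightarrow> g j \<in> carrier R"
  shows "(\<Oplus>j\<in>{..<k}. f j \<ominus> g j) = (\<Oplus>j\<in>{..<k}. f j) \<ominus> (\<Oplus>j\<in>{..<k}. g j)"
proof -
  have "(\<Oplus>j\<in>{..<k}. f j \<ominus> g j) = (\<Oplus>j\<in>{..<k}. f j \<oplus> (\<ominus> \<one>) \<otimes> g j)"
    by (rule finsum_cong') (use assms in \<open>auto simp: a_minus_def l_minus\<close>)
  also have "\<dots> = (\<Oplus>j\<in>{..<k}. f j) \<oplus> (\<Oplus>j\<in>{..<k}. (\<ominus> \<one>) \<otimes> g j)"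
    by (rule finsum_addf) (use assms in auto)
  also have "(\<Oplus>j\<in>{..<k}. (\<ominus> \<one>) \<otimes> g j) = (\<ominus> \<one>) \<otimes> (\<Oplus>j\<in>{..<k}. g j)"
    by (rule finsum_rdistr[symmetric]) (use assms in auto)
  finally show ?thesis using assms by (simp add: a_minus_def l_minus finsum_closed Pi_def)
qed

lemma hom_finsum_sub:
  fixes k :: nat
  assumes M: "subfield M R" and s: "s \<in> ring_hom (R\<lparr>carrier := M\<rparr>) R"
    and f: "\<And>j. j < k \<Longrightarrow> f j \<in> M"
  shows "s (\<Oplus>j\<in>{..<k}. f j) = (\<Oplus>j\<in>{..<k}. s (f j))"
  using f
proof (induct k)
  case 0 then show ?case using hom_sub_zero[OF M s] by simp
next
  case (Suc k)
  have MS: "M \<subseteq> carrier R" using subfieldE(3)[OF M] .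
  have sr: "subring M R" using subfieldE(1)[OF M] .
  have c1: "\<And>j. j < Suc k \<Longrightarrow> f j \<in> carrier R" using Suc(2) MS by blast
  have c2: "\<And>j. j < Suc k \<Longrightarrow> s (f j) \<in> carrier R" using Suc(2) hom_sub_closed[OF M s] by blast
  have inM: "(\<Oplus>j\<in>{..<k}. f j) \<in> M" by (rule finsum_in_subring[OF sr]) (use Suc(2) in auto)
  show ?case
    using finsum_lessThan_Suc[OF c1] finsum_lessThan_Suc[OF c2] Suc hom_sub_add[OF M s _ inM, of "f k"]
    by simp
qed

lemma Span_mono_field:
  assumes "K \<subseteq> E" "set Us \<subseteq> carrier R"
  shows "Span K Us \<subseteq> Span E Us"
  using assms(2)
proof (induct Us)
  case Nil then show ?case by simp
next
  case (Cons u Us)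
  show ?case
  proof
    fix x assume "x \<in> Span K (u # Us)"
    then have "x \<in> line_extension K u (Span K Us)" by simp
    then obtain k v where "k \<in> K" "v \<in> Span K Us" "x = k \<otimes> u \<oplus> v"
      using line_extension_mem_iff by blast
    then have "k \<in> E" "v \<in> Span E Us" using assms(1) Cons by auto
    then have "x \<in> line_extension E u (Span E Us)"
      using line_extension_mem_iff \<open>x = k \<otimes> u \<oplus> v\<close> by blast
    then show "x \<in> Span E (u # Us)" by simp
  qed
qed

lemma subfield_subalgebra:
  assumes E: "subfield E R" and M: "subfield M R" and EM: "E \<subseteq> M"
  shows "subalgebra E M R"
  unfolding subalgebra_def subalgebra_axioms_def
  using subring.axioms(1)[OF subfieldE(1)[OF M]] subringE(6)[OF subfieldE(1)[OF M]] EM by blast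

lemma findim_intermediate:
  assumes K: "subfield K R" and E: "subfield E R" and M: "subfield M R"
    and KE: "K \<subseteq> E" and EM: "E \<subseteq> M" and fd: "finite_dimension K M"
  shows "finite_dimension E M"
proof -
  obtain n where n: "dimension n K M" using fd by (auto simp: finite_dimension_def)
  obtain Us where Us: "set Us \<subseteq> carrier R" "independent K Us" "length Us = n" "Span K Us = M"
    using exists_base[OF K n] by blast
  have UsM: "set Us \<subseteq> M" using Span_base_incl[OF K Us(1)] Us(4) by simp
  have "Span E Us \<subseteq> M" using subalgebra_Span_incl[OF E subfield_subalgebra[OF E M EM] UsM] .
  moreover have "M \<subseteq> Span E Us" using Span_mono_field[OF KE Us(1)] Us(4) by simp
  ultimately have "Span E Us = M" by blast
  then show ?thesis using Span_finite_dimension[OF E Us(1)] by simp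
qed

lemma artin_bound:
  assumes K: "subfield K R" and M: "subfield M R" and KM: "K \<subseteq> M"
    and H: "subgroup H (Gal R K M)" and fin: "finite H"
    and us: "set us \<subseteq> M" and ind: "independent (fixf M H) us"
  shows "length us \<le> card H"
proof (rule ccontr)
  define k where "k = length us"
  define m where "m = card H"
  assume "\<not> length us \<le> card H"
  then have mk: "m < k" using k_def m_def by simp
  have MS: "M \<subseteq> carrier R" using subfieldE(3)[OF M] .
  note Mp = subringE[OF subfieldE(1)[OF M]]
  have HG: "H \<subseteq> carrier (Gal R K M)" using subgroup.subset[OF H] .
  interpret G: group "Gal R K M" using Gal_group[OF M KM] .
  have hcl: "\<And>h x. h \<in> H \<Longrightarrow> x \<in> M \<Longrightarrow> h x \<in> M" using Gal_closed HG by blast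
  have hR: "\<And>h. h \<in> H \<Longrightarrow> h \<in> ring_hom (R\<lparr>carrier := M\<rparr>) R"
    using HG ring_hom_sub_to_R[OF M] by (auto simp: carrier_Gal)
  have uM: "\<And>j. j < k \<Longrightarrow> us ! j \<in> M" using us k_def nth_mem by blast
  have uC: "\<And>j. j < k \<Longrightarrow> us ! j \<in> carrier R" using uM MS by blast
  obtain hs where hs: "bij_betw hs {0..<m} H" using ex_bij_betw_nat_finite[OF fin] m_def by blast
  have hsH: "\<And>i. i < m \<Longrightarrow> hs i \<in> H" using hs bij_betwE by fastforce
  have Hhs: "\<And>h. h \<in> H \<Longrightarrow> \<exists>i<m. hs i = h"
    using hs unfolding bij_betw_def by (metis atLeastLessThan_iff imageE zero_le)
  define P where "P = (\<lambda>x. (\<forall>j<k. x j \<in> M) \<and> (\<forall>h\<in>H. (\<Oplus>j\<in>{..<k}. h (us ! j) \<otimes> x j) = \<zero>))"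
  have aM: "\<forall>i<m. \<forall>j<k. hs i (us ! j) \<in> M" using hcl hsH uM by blast
  obtain x0 where x0: "\<forall>j<k. x0 j \<in> M" "\<exists>j<k. x0 j \<noteq> \<zero>"
      "\<forall>i<m. (\<Oplus>j\<in>{..<k}. hs i (us ! j) \<otimes> x0 j) = \<zero>"
    using lin_sys[OF M mk aM] by blast
  have "P x0" unfolding P_def using x0 Hhs by blast
  obtain x where x: "P x" "\<exists>j<k. x j \<noteq> \<zero>"
    "\<And>y. P y \<and> {j. j < k \<and> y j \<noteq> \<zero>} \<subset> {j. j < k \<and> x j \<noteq> \<zero>} \<Longrightarrow> (\<forall>j<k. y j = \<zero>)"
    using min_supp[of P x0 k] \<open>P x0\<close> x0(2) by blast
  have xM: "\<And>j. j < k \<Longrightarrow> x j \<in> M" using x(1) P_def by blast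
  obtain a where a: "a < k" "x a \<noteq> \<zero>" using x(2) by blast
  define c where "c = inv (x a)"
  have cM: "c \<in> M" "c \<otimes> x a = \<one>" "c \<noteq> \<zero>"
    using subfield_m_inv[OF M, of "x a"] xM[OF a(1)] a(2) c_def by auto
  have cC: "c \<in> carrier R" using cM MS by blast
  define z where "z = (\<lambda>j. c \<otimes> x j)"
  have zM: "\<And>j. j < k \<Longrightarrow> z j \<in> M" using z_def cM xM Mp(6) by simp
  have zC: "\<And>j. j < k \<Longrightarrow> z j \<in> carrier R" using zM MS by blast
  have za: "z a = \<one>" using z_def cM by simp
  have zsupp: "{j. j < k \<and> z j \<noteq> \<zero>} = {j. j < k \<and> x j \<noteq> \<zero>}"
    using z_def cM cC xM MS integral_iff by auto
  have huC: "\<And>h j. h \<in> H \<Longrightarrow> j < k \<Longrightarrow> h (us ! j) \<in> carrier R" using hcl uM MS by blast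
  have Pz: "P z"
    unfolding P_def
  proof (intro conjI ballI allI impI)
    fix j assume "j < k" then show "z j \<in> M" by (rule zM)
  next
    fix h assume h: "h \<in> H"
    have "c \<otimes> (\<Oplus>j\<in>{..<k}. h (us ! j) \<otimes> x j) = (\<Oplus>j\<in>{..<k}. c \<otimes> (h (us ! j) \<otimes> x j))"
      by (rule finsum_rdistr) (use cC huC[OF h] xM MS in auto)
    also have "\<dots> = (\<Oplus>j\<in>{..<k}. h (us ! j) \<otimes> z j)"
    proof (rule finsum_cong')
      fix j assume "j \<in> {..<k}" then have j: "j < k" by simp
      show "c \<otimes> (h (us ! j) \<otimes> x j) = h (us ! j) \<otimes> z j"
        using z_def cC huC[OF h j] xM[OF j] MS by (simp add: m_lcomm subsetD)
    qed (use huC[OF h] zC in auto)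
    finally show "(\<Oplus>j\<in>{..<k}. h (us ! j) \<otimes> z j) = \<zero>"
      using x(1) h cC unfolding P_def by simp
  qed
  have zfix: "g (z j) = z j" if g: "g \<in> H" and j: "j < k" for g j
  proof -
    define y where "y = (\<lambda>j. z j \<ominus> g (z j))"
    have gzC: "\<And>j. j < k \<Longrightarrow> g (z j) \<in> carrier R" using hcl[OF g zM] MS by blast
    have yM: "\<And>j. j < k \<Longrightarrow> y j \<in> M"
      using y_def zM hcl[OF g] Mp(5,7) by (simp add: a_minus_def)
    have Py: "P y"
      unfolding P_def
    proof (intro conjI ballI allI impI)
      fix j assume "j < k" then show "y j \<in> M" by (rule yM)
    next
      fix h assume h: "h \<in> H"
      define h' where "h' = inv\<^bsub>Gal R K M\<^esub> g \<otimes>\<^bsub>Gal R K M\<^esub> h"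
      have gG: "g \<in> carrier (Gal R K M)" and hG: "h \<in> carrier (Gal R K M)" using g h HG by auto
      have h'H: "h' \<in> H" using h'_def subgroup.m_closed[OF H subgroup.m_inv_closed[OF H g] h] by simp
      have h'G: "h' \<in> carrier (Gal R K M)" using h'H HG by auto
      have "g \<otimes>\<^bsub>Gal R K M\<^esub> h' = h" using h'_def gG hG by (simp add: G.m_assoc[symmetric])
      then have gh': "\<And>v. v \<in> M \<Longrightarrow> g (h' v) = h v"
        using mult_Gal[OF gG h'G] by (metis compose_eq)
      have "(\<Oplus>j\<in>{..<k}. h (us ! j) \<otimes> g (z j)) = (\<Oplus>j\<in>{..<k}. g (h' (us ! j) \<otimes> z j))"
      proof (rule finsum_cong')
        fix j assume "j \<in> {..<k}" then have j: "j < k" by simp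
        show "h (us ! j) \<otimes> g (z j) = g (h' (us ! j) \<otimes> z j)"
          using hom_sub_mult[OF M hR[OF g] hcl[OF h'H uM[OF j]] zM[OF j]] gh'[OF uM[OF j]] by simp
      qed (use hcl[OF g] hcl[OF h'H] uM zM Mp(6) MS in auto)
      also have "\<dots> = g (\<Oplus>j\<in>{..<k}. h' (us ! j) \<otimes> z j)"
        by (rule hom_finsum_sub[OF M hR[OF g], symmetric]) (use hcl[OF h'H] uM zM Mp(6) in auto)
      also have "\<dots> = \<zero>" using Pz h'H hom_sub_zero[OF M hR[OF g]] unfolding P_def by simp
      finally have s2: "(\<Oplus>j\<in>{..<k}. h (us ! j) \<otimes> g (z j)) = \<zero>" .
      have "(\<Oplus>j\<in>{..<k}. h (us ! j) \<otimes> y j) = (\<Oplus>j\<in>{..<k}. h (us ! j) \<otimes> z j \<ominus> h (us ! j) \<otimes> g (z j))"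
      proof (rule finsum_cong')
        fix j assume "j \<in> {..<k}" then have j: "j < k" by simp
        show "h (us ! j) \<otimes> y j = h (us ! j) \<otimes> z j \<ominus> h (us ! j) \<otimes> g (z j)"
        proof -
          have c: "h (us ! j) \<in> carrier R" "z j \<in> carrier R" "g (z j) \<in> carrier R"
            using huC[OF h j] zC[OF j] hcl[OF g zM[OF j]] MS by auto
          then show ?thesis unfolding y_def by algebra
        qed
      qed (use huC[OF h] zC gzC in auto)
      also have "\<dots> = (\<Oplus>j\<in>{..<k}. h (us ! j) \<otimes> z j) \<ominus> (\<Oplus>j\<in>{..<k}. h (us ! j) \<otimes> g (z j))"
        by (rule finsum_diff) (use huC[OF h] zC gzC in auto)
      finally show "(\<Oplus>j\<in>{..<k}. h (us ! j) \<otimes> y j) = \<zero>"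
        using s2 Pz h unfolding P_def by simp
    qed
    have "{j. j < k \<and> y j \<noteq> \<zero>} \<subseteq> {j. j < k \<and> x j \<noteq> \<zero>} - {a}"
    proof
      fix j assume j: "j \<in> {j. j < k \<and> y j \<noteq> \<zero>}"
      have "j \<noteq> a"
      proof
        assume "j = a"
        then have "y j = \<one> \<ominus> \<one>" using y_def za hom_sub_one[OF M hR[OF g]] by simp
        then show False using j by simp
      qed
      moreover have "z j \<noteq> \<zero>"
      proof
        assume "z j = \<zero>"
        then have "y j = \<zero> \<ominus> \<zero>" using y_def hom_sub_zero[OF M hR[OF g]] by simp
        then show False using j by simp
      qed
      ultimately show "j \<in> {j. j < k \<and> x j \<noteq> \<zero>} - {a}" using j zsupp by blast
    qed
    then have "{j. j < k \<and> y j \<noteq> \<zero>} \<subset> {j. j < k \<and> x j \<noteq> \<zero>}" using a by blast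
    then have "y j = \<zero>" using x(3)[of y] Py j by blast
    then show ?thesis using y_def zC[OF j] hcl[OF g zM[OF j]] MS
      by (metis r_right_minus_eq subsetD)
  qed
  have zE: "\<And>j. j < k \<Longrightarrow> z j \<in> fixf M H" using zfix zM by (auto simp: fixf_def)
  have oneH: "\<one>\<^bsub>Gal R K M\<^esub> \<in> H" using subgroup.one_closed[OF H] .
  have "(\<Oplus>j\<in>{..<k}. (\<lambda>x\<in>M. x) (us ! j) \<otimes> z j) = \<zero>"
    using Pz oneH unfolding P_def one_Gal by blast
  then have sum0: "(\<Oplus>j\<in>{..<k}. z j \<otimes> us ! j) = \<zero>"
  proof -
    assume A: "(\<Oplus>j\<in>{..<k}. (\<lambda>x\<in>M. x) (us ! j) \<otimes> z j) = \<zero>"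
    have "(\<Oplus>j\<in>{..<k}. z j \<otimes> us ! j) = (\<Oplus>j\<in>{..<k}. (\<lambda>x\<in>M. x) (us ! j) \<otimes> z j)"
    proof (rule finsum_cong')
      fix j assume "j \<in> {..<k}" then have j: "j < k" by simp
      show "z j \<otimes> us ! j = (\<lambda>x\<in>M. x) (us ! j) \<otimes> z j"
        using uM[OF j] zC[OF j] MS by (simp add: m_comm subsetD)
    qed (use uC uM zC in auto)
    then show ?thesis using A by simp
  qed
  define Ks where "Ks = map z [0..<k]"
  have EM: "subfield (fixf M H) R" using fixf_subfield(1)[OF M K KM HG] .
  have KsE: "set Ks \<subseteq> fixf M H" using zE Ks_def by auto
  have "combine Ks us = (\<Oplus>j\<in>{..<length us}. Ks ! j \<otimes> us ! j)"
    by (rule combine_finsum) (use KsE fixf_subfield(3)[OF M K KM HG] MS us Ks_def k_def in auto)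
  also have "\<dots> = (\<Oplus>j\<in>{..<k}. z j \<otimes> us ! j)"
    by (rule finsum_cong') (use Ks_def k_def zC uC in auto)
  finally have "combine Ks us = \<zero>" using sum0 by simp
  then have "set (take (length us) Ks) \<subseteq> {\<zero>}"
    using independent_imp_trivial_combine[OF EM ind KsE] by blast
  then have "z a = \<zero>" using a Ks_def k_def by (auto simp: image_subset_iff)
  then show False using za by simp
qed

lemma artin_dim:
  assumes K: "subfield K R" and M: "subfield M R" and KM: "K \<subseteq> M" and fd: "finite_dimension K M"
    and H: "subgroup H (Gal R K M)" and fin: "finite H"
  shows "finite_dimension (fixf M H) M" and "(dim over (fixf M H)) M \<le> card H"
proof -
  have HG: "H \<subseteq> carrier (Gal R K M)" using subgroup.subset[OF H] .
  note F = fixf_subfield[OF M K KM HG]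
  show fdE: "finite_dimension (fixf M H) M"
    using findim_intermediate[OF K F(1) M F(2,3) fd] .
  obtain Us where Us: "set Us \<subseteq> carrier R" "independent (fixf M H) Us"
      "length Us = (dim over (fixf M H)) M" "Span (fixf M H) Us = M"
    using exists_base[OF F(1) finite_dimensionE[OF F(1) fdE]] by blast
  have UsM: "set Us \<subseteq> M" using Span_base_incl[OF F(1) Us(1)] Us(4) by simp
  show "(dim over (fixf M H)) M \<le> card H"
    using artin_bound[OF K M KM H fin UsM Us(2)] Us(3) by simp
qed

end

context field
begin

lemma Gal_E_char:
  assumes "K \<subseteq> E"
  shows "carrier (Gal R E M) = {s \<in> carrier (Gal R K M). \<forall>x\<in>E. s x = x}"
  using assms by (auto simp: carrier_Gal)

lemma restrict_hom_emb:
  assumes M: "subfield M R" and E: "subfield E R" and EM: "E \<subseteq> M"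
    and s: "s \<in> ring_hom (R\<lparr>carrier := M\<rparr>) R"
  shows "restrict s E \<in> ring_hom (R\<lparr>carrier := E\<rparr>) R"
proof (rule ring_hom_memI)
  fix x assume "x \<in> carrier (R\<lparr>carrier := E\<rparr>)"
  then show "restrict s E x \<in> carrier R" using hom_sub_closed[OF M s] EM by auto
next
  note Ep = subringE[OF subfieldE(1)[OF E]]
  fix x y assume "x \<in> carrier (R\<lparr>carrier := E\<rparr>)" "y \<in> carrier (R\<lparr>carrier := E\<rparr>)"
  then have xy: "x \<in> E" "y \<in> E" by auto
  show "restrict s E (x \<otimes>\<^bsub>R\<lparr>carrier := E\<rparr>\<^esub> y) = restrict s E x \<otimes> restrict s E y"
    using hom_sub_mult[OF M s] xy EM Ep(6) by auto
  show "restrict s E (x \<oplus>\<^bsub>R\<lparr>carrier := E\<rparr>\<^esub> y) = restrict s E x \<oplus> restrict s E y"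
    using hom_sub_add[OF M s] xy EM Ep(7) by auto
next
  show "restrict s E \<one>\<^bsub>R\<lparr>carrier := E\<rparr>\<^esub> = \<one>"
    using hom_sub_one[OF M s] subringE(3)[OF subfieldE(1)[OF E]] by simp
qed

lemma Gal_restrict_emb:
  assumes M: "subfield M R" and E: "subfield E R" and EM: "E \<subseteq> M" and KE: "K \<subseteq> E"
    and s: "s \<in> carrier (Gal R K M)"
  shows "emb R K E (restrict s E)"
  using restrict_hom_emb[OF M E EM] Gal_emb[OF M s] KE s
  by (auto simp: emb_def carrier_Gal)

lemma dim_pos:
  assumes "subfield K R" "subfield M R" "dimension n K M"
  shows "n \<ge> 1"
proof (rule ccontr)
  assume "\<not> n \<ge> 1" then have "n = 0" by simp
  then have "M = {\<zero>}" using dimension_zero[OF assms(1)] assms(3) by simp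
  then show False using subringE(3)[OF subfieldE(1)[OF assms(2)]] by simp
qed

lemma dim_one_eq:
  assumes E: "subfield E R" and E': "subfield E' R" and EE: "E \<subseteq> E'" and d: "dimension 1 E E'"
  shows "E' = E"
proof -
  have one: "\<one> \<in> E'" using subringE(3)[OF subfieldE(1)[OF E']] .
  have ind: "independent E [\<one>]"
    by (rule li_Cons) auto
  have "Span E [\<one>] = E'"
    using independent_length_eq_dimension[OF E d ind] one by simp
  moreover have "Span E [\<one>] = E"
  proof -
    have "Span E [\<one>] = line_extension E \<one> {\<zero>}" by simp
    also have "\<dots> = E"
      using subfieldE(3)[OF E] by (auto simp: line_extension_mem_iff subsetD)
    finally show ?thesis .
  qed
  ultimately show ?thesis by simp
qed

lemma galois_count:
  assumes K: "subfield K R" and M: "subfield M R" and KM: "K \<subseteq> M" and gal: "galois R K M"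
    and E: "subfield E R" and KE: "K \<subseteq> E" and EM: "E \<subseteq> M"
  shows "finite_dimension K E" and "finite_dimension E M"
    and "(dim over K) M = (dim over K) E * (dim over E) M"
    and "card (carrier (Gal R E M)) = (dim over E) M"
    and "card ((\<lambda>s. restrict s E) ` carrier (Gal R K M)) = (dim over K) E"
    and "finite (carrier (Gal R K M))"
proof -
  have fdM: "finite_dimension K M" and cardG: "card (carrier (Gal R K M)) = (dim over K) M"
    using gal by (auto simp: galois_def finite_ext_def degree_ext_def over_def)
  show fdE: "finite_dimension K E"
    using subalbegra_incl_imp_finite_dimension[OF K fdM subfield_subalgebra[OF K E KE] EM] .
  show fdEM: "finite_dimension E M" using findim_intermediate[OF K E M KE EM fdM] .
  show tower: "(dim over K) M = (dim over K) E * (dim over E) M"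
    using telescopic_base_dim(2)[OF K E fdE fdEM] .
  define dE where "dE = (dim over K) E"
  define dEM where "dEM = (dim over E) M"
  have dimE: "dimension dE K E" using finite_dimensionE[OF K fdE] dE_def by simp
  have dimEM: "dimension dEM E M" using finite_dimensionE[OF E fdEM] dEM_def by simp
  have dimM: "dimension ((dim over K) M) K M" using finite_dimensionE[OF K fdM] .
  have posM: "(dim over K) M \<ge> 1" using dim_pos[OF K M dimM] .
  show finG: "finite (carrier (Gal R K M))" using cardG posM card.infinite by fastforce
  interpret G: group "Gal R K M" using Gal_group[OF M KM] .
  define H where "H = carrier (Gal R E M)"
  define I where "I = (\<lambda>s. restrict s E) ` carrier (Gal R K M)"
  have HG: "H \<subseteq> carrier (Gal R K M)" using Gal_mono[OF KE] H_def by simp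
  have Hfin: "finite H" and Hle: "card H \<le> dEM"
  proof -
    have "\<And>s. s \<in> H \<Longrightarrow> emb R E M s" using Gal_emb[OF M] H_def by blast
    moreover have "inj_on (\<lambda>s. restrict s M) H"
      unfolding H_def by (rule inj_onI) (auto simp: carrier_Gal Bij_def extensional_restrict)
    ultimately show "finite H" "card H \<le> dEM" using dedekind_bound[OF E M EM dimEM] by blast+
  qed
  have Ifin: "finite I" and Ile: "card I \<le> dE"
  proof -
    have "\<And>t. t \<in> I \<Longrightarrow> emb R K E t" using Gal_restrict_emb[OF M E EM KE] I_def by blast
    moreover have "inj_on (\<lambda>s. restrict s E) I"
      unfolding I_def by (rule inj_onI) auto
    ultimately show "finite I" "card I \<le> dE" using dedekind_bound[OF K E KE dimE] by blast+
  qed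
  define fib where "fib = (\<lambda>t. {s \<in> carrier (Gal R K M). restrict s E = t})"
  have fib_card: "card (fib t) = card H" if t: "t \<in> I" for t
  proof -
    obtain s0 where s0: "s0 \<in> carrier (Gal R K M)" "t = restrict s0 E" using t I_def by blast
    have "fib t = (\<lambda>h. s0 \<otimes>\<^bsub>Gal R K M\<^esub> h) ` H"
    proof
      show "fib t \<subseteq> (\<lambda>h. s0 \<otimes>\<^bsub>Gal R K M\<^esub> h) ` H"
      proof
        fix s assume s: "s \<in> fib t"
        then have sG: "s \<in> carrier (Gal R K M)" and rs: "restrict s E = restrict s0 E"
          using fib_def s0 by auto
        define h where "h = inv\<^bsub>Gal R K M\<^esub> s0 \<otimes>\<^bsub>Gal R K M\<^esub> s"
        have hG: "h \<in> carrier (Gal R K M)" using h_def sG s0 by simp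
        have "h x = x" if x: "x \<in> E" for x
        proof -
          have xM: "x \<in> M" using x EM by blast
          have sx: "s x = s0 x" using rs x by (metis restrict_apply')
          have s0x: "s0 x \<in> M" using Gal_closed[OF s0(1) xM] .
          have "h x = (\<lambda>x\<in>M. inv_into M s0 x) (s x)"
            using h_def mult_Gal[OF G.inv_closed[OF s0(1)] sG] inv_Gal[OF M KM s0(1)] xM
            by (simp add: compose_def)
          also have "\<dots> = inv_into M s0 (s0 x)" using sx s0x by simp
          also have "\<dots> = x"
            using s0(1) xM by (auto simp: carrier_Gal Bij_def bij_betw_def intro: inv_into_f_f)
          finally show ?thesis .
        qed
        then have "h \<in> H" using hG Gal_E_char[OF KE] H_def by blast
        moreover have "s = s0 \<otimes>\<^bsub>Gal R K M\<^esub> h"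
          using h_def sG s0(1) by (simp add: G.m_assoc[symmetric])
        ultimately show "s \<in> (\<lambda>h. s0 \<otimes>\<^bsub>Gal R K M\<^esub> h) ` H" by blast
      qed
    next
      show "(\<lambda>h. s0 \<otimes>\<^bsub>Gal R K M\<^esub> h) ` H \<subseteq> fib t"
      proof
        fix s assume "s \<in> (\<lambda>h. s0 \<otimes>\<^bsub>Gal R K M\<^esub> h) ` H"
        then obtain h where h: "h \<in> H" "s = s0 \<otimes>\<^bsub>Gal R K M\<^esub> h" by blast
        have hG: "h \<in> carrier (Gal R K M)" using h HG by blast
        have hE: "\<And>x. x \<in> E \<Longrightarrow> h x = x" using h(1) Gal_E_char[OF KE] H_def by blast
        have "restrict s E = restrict s0 E"
        proof (rule restrict_ext)
          fix x assume x: "x \<in> E"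
          then show "s x = s0 x" using h(2) mult_Gal[OF s0(1) hG] hE EM by (auto simp: compose_def)
        qed
        then show "s \<in> fib t" using fib_def s0 h(2) hG by simp
      qed
    qed
    moreover have "inj_on (\<lambda>h. s0 \<otimes>\<^bsub>Gal R K M\<^esub> h) H"
    proof (rule inj_onI)
      fix a b assume ab: "a \<in> H" "b \<in> H" "s0 \<otimes>\<^bsub>Gal R K M\<^esub> a = s0 \<otimes>\<^bsub>Gal R K M\<^esub> b"
      then have "a \<in> carrier (Gal R K M)" "b \<in> carrier (Gal R K M)" using HG by auto
      then show "a = b" using ab(3) s0(1) by (metis G.inv_solve_left G.m_closed)
    qed
    ultimately show ?thesis by (simp add: card_image)
  qed
  have "carrier (Gal R K M) = (\<Union>t\<in>I. fib t)" using fib_def I_def by auto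
  then have "card (carrier (Gal R K M)) = (\<Sum>t\<in>I. card (fib t))"
    using card_UN_disjoint[OF Ifin, of fib] finG fib_def by (auto simp: finite_subset)
  also have "\<dots> = card I * card H" using fib_card by simp
  finally have prod: "card I * card H = dE * dEM" using cardG tower dE_def dEM_def by simp
  have Hpos: "card H \<ge> 1"
  proof -
    have "\<one>\<^bsub>Gal R E M\<^esub> \<in> H" using monoid.one_closed[OF group.is_monoid[OF Gal_group[OF M EM]]] H_def by simp
    then show ?thesis using Hfin by (metis One_nat_def Suc_leI card_gt_0_iff empty_iff)
  qed
  have dEpos: "dE \<ge> 1" using dim_pos[OF K E dimE] .
  have "card H = dEM \<and> card I = dE"
  proof -
    have a: "card I * card H \<le> dE * card H" using Ile by simp
    have b: "dE * card H \<le> dE * dEM" using Hle by simp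
    have "dE * card H = dE * dEM" using a b prod by linarith
    then have "card H = dEM" using dEpos by simp
    then show ?thesis using prod Hpos by simp
  qed
  then show "card (carrier (Gal R E M)) = (dim over E) M"
    and "card ((\<lambda>s. restrict s E) ` carrier (Gal R K M)) = (dim over K) E"
    using H_def I_def dE_def dEM_def by auto
qed

end

context field
begin

lemma galois_basic:
  assumes "galois R K M"
  shows "subfield M R" "K \<subseteq> M" "finite_dimension K M" "card (carrier (Gal R K M)) = (dim over K) M"
  using assms by (auto simp: galois_def finite_ext_def degree_ext_def over_def)

lemma fix_Gal_eq:
  assumes K: "subfield K R" and gal: "galois R K M"
    and E: "subfield E R" and KE: "K \<subseteq> E" and EM: "E \<subseteq> M"
  shows "fixf M (carrier (Gal R E M)) = E"
proof -
  note gb = galois_basic[OF gal]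
  note M = gb(1) and KM = gb(2)
  define H where "H = carrier (Gal R E M)"
  define E' where "E' = fixf M H"
  have HE: "H \<subseteq> carrier (Gal R E M)" using H_def by simp
  note F = fixf_subfield[OF M E EM HE]
  have E'1: "subfield E' R" "E \<subseteq> E'" "E' \<subseteq> M" using F E'_def by auto
  have KE': "K \<subseteq> E'" using KE E'1 by blast
  have HE': "H \<subseteq> carrier (Gal R E' M)"
    using Gal_E_char[OF E'1(2), of M] H_def E'_def by (auto simp: fixf_def)
  note c1 = galois_count[OF K M KM gal E KE EM]
  note c2 = galois_count[OF K M KM gal E'1(1) KE' E'1(3)]
  have finH': "finite (carrier (Gal R E' M))"
    using c2(6) Gal_mono[OF KE'] finite_subset by metis
  have "card H \<le> card (carrier (Gal R E' M))" using card_mono[OF finH' HE'] .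
  then have le: "(dim over E) M \<le> (dim over E') M" using c1(4) c2(4) H_def by simp
  have fdEE': "finite_dimension E E'"
    using subalbegra_incl_imp_finite_dimension[OF E c1(2) subfield_subalgebra[OF E E'1(1,2)] E'1(3)] .
  have tower: "(dim over E) M = (dim over E) E' * (dim over E') M"
    using telescopic_base_dim(2)[OF E E'1(1) fdEE' c2(2)] .
  have p1: "(dim over E') M \<ge> 1" using dim_pos[OF E'1(1) M finite_dimensionE[OF E'1(1) c2(2)]] .
  have p2: "(dim over E) E' \<ge> 1" using dim_pos[OF E E'1(1) finite_dimensionE[OF E fdEE']] .
  have "(dim over E) E' = 1"
  proof (rule ccontr)
    assume "(dim over E) E' \<noteq> 1"
    then have "(dim over E) E' \<ge> 2" using p2 by simp
    then have "(dim over E) E' * (dim over E') M \<ge> 2 * (dim over E') M" by simp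
    then show False using tower le p1 by simp
  qed
  then have "dimension 1 E E'" using finite_dimensionE[OF E fdEE'] by simp
  then have "E' = E" using dim_one_eq[OF E E'1(1,2)] by simp
  then show ?thesis using E'_def H_def by simp
qed

lemma Gal_fixf:
  assumes K: "subfield K R" and gal: "galois R K M" and H: "subgroup H (Gal R K M)"
  shows "carrier (Gal R (fixf M H) M) = H" and "(dim over (fixf M H)) M = card H"
    and "subfield (fixf M H) R" "K \<subseteq> fixf M H" "fixf M H \<subseteq> M"
proof -
  note gb = galois_basic[OF gal]
  note M = gb(1) and KM = gb(2)
  have HG: "H \<subseteq> carrier (Gal R K M)" using subgroup.subset[OF H] .
  note F = fixf_subfield[OF M K KM HG]
  show "subfield (fixf M H) R" "K \<subseteq> fixf M H" "fixf M H \<subseteq> M" using F by auto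
  note c = galois_count[OF K M KM gal F(1,2,3)]
  have finH: "finite H" using c(6) HG finite_subset by metis
  have HE: "H \<subseteq> carrier (Gal R (fixf M H) M)"
    using Gal_E_char[OF F(2), of M] HG by (auto simp: fixf_def)
  have le: "(dim over (fixf M H)) M \<le> card H" using artin_dim(2)[OF K M KM gb(3) H finH] .
  have finE: "finite (carrier (Gal R (fixf M H) M))"
    using c(6) Gal_mono[OF F(2)] finite_subset by metis
  have "card H \<le> card (carrier (Gal R (fixf M H) M))" using card_mono[OF finE HE] .
  then have eq: "card H = card (carrier (Gal R (fixf M H) M))" using c(4) le by simp
  then show "carrier (Gal R (fixf M H) M) = H" using card_subset_eq[OF finE HE] by simp
  show "(dim over (fixf M H)) M = card H" using eq c(4) by simp
qed

lemma stable_galois: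
  assumes K: "subfield K R" and gal: "galois R K M"
    and E: "subfield E R" and KE: "K \<subseteq> E" and EM: "E \<subseteq> M"
    and st: "\<And>s x. s \<in> carrier (Gal R K M) \<Longrightarrow> x \<in> E \<Longrightarrow> s x \<in> E"
  shows "galois R K E"
proof -
  note gb = galois_basic[OF gal]
  note M = gb(1) and KM = gb(2)
  interpret G: group "Gal R K M" using Gal_group[OF M KM] .
  note c = galois_count[OF K M KM gal E KE EM]
  note Ep = subringE[OF subfieldE(1)[OF E]]
  define I where "I = (\<lambda>s. restrict s E) ` carrier (Gal R K M)"
  have IG: "I \<subseteq> carrier (Gal R K E)"
  proof
    fix t assume "t \<in> I"
    then obtain s where s: "s \<in> carrier (Gal R K M)" "t = restrict s E" using I_def by blast
    have sB: "s \<in> Bij M" and sh: "s \<in> ring_hom (R\<lparr>carrier := M\<rparr>) (R\<lparr>carrier := M\<rparr>)"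
      and sK: "\<forall>k\<in>K. s k = k" using s(1) by (auto simp: carrier_Gal)
    have inj: "inj_on s M" using sB unfolding Bij_def by (blast dest: bij_betw_imp_inj_on)
    have "bij_betw t E E"
    proof (rule bij_betw_imageI)
      show "inj_on t E" using inj EM s(2) by (auto simp: inj_on_def)
      show "t ` E = E"
      proof
        show "t ` E \<subseteq> E" using st[OF s(1)] s(2) by auto
        show "E \<subseteq> t ` E"
        proof
          fix y assume y: "y \<in> E"
          define s' where "s' = inv\<^bsub>Gal R K M\<^esub> s"
          have s'G: "s' \<in> carrier (Gal R K M)" using s'_def s(1) by simp
          have "s \<otimes>\<^bsub>Gal R K M\<^esub> s' = \<one>\<^bsub>Gal R K M\<^esub>" using s'_def s(1) by simp
          then have "s (s' y) = y" using mult_Gal[OF s(1) s'G] one_Gal y EM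
            by (metis compose_eq restrict_apply' subsetD)
          moreover have "s' y \<in> E" using st[OF s'G y] .
          ultimately show "y \<in> t ` E" using s(2) by force
        qed
      qed
    qed
    moreover have "t \<in> extensional E" using s(2) by simp
    moreover have "t \<in> ring_hom (R\<lparr>carrier := E\<rparr>) (R\<lparr>carrier := E\<rparr>)"
    proof (rule ring_hom_subI)
      show "\<And>x. x \<in> E \<Longrightarrow> t x \<in> E" using st[OF s(1)] s(2) by simp
      show "\<And>x y. x \<in> E \<Longrightarrow> y \<in> E \<Longrightarrow> t (x \<otimes> y) = t x \<otimes> t y"
        using ring_hom_subD(2)[OF sh] s(2) EM Ep(6) by auto
      show "\<And>x y. x \<in> E \<Longrightarrow> y \<in> E \<Longrightarrow> t (x \<oplus> y) = t x \<oplus> t y"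
        using ring_hom_subD(3)[OF sh] s(2) EM Ep(7) by auto
      show "t \<one> = \<one>" using ring_hom_subD(4)[OF sh] s(2) Ep(3) by simp
    qed
    moreover have "\<forall>k\<in>K. t k = k" using sK s(2) KE by auto
    ultimately show "t \<in> carrier (Gal R K E)" by (simp add: carrier_Gal Bij_def)
  qed
  have dimE: "dimension ((dim over K) E) K E" using finite_dimensionE[OF K c(1)] .
  have "finite (carrier (Gal R K E))" and le: "card (carrier (Gal R K E)) \<le> (dim over K) E"
  proof -
    have "\<And>s. s \<in> carrier (Gal R K E) \<Longrightarrow> emb R K E s" using Gal_emb[OF E] by blast
    moreover have "inj_on (\<lambda>s. restrict s E) (carrier (Gal R K E))"
      by (rule inj_onI) (auto simp: carrier_Gal Bij_def extensional_restrict)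
    ultimately show "finite (carrier (Gal R K E))" "card (carrier (Gal R K E)) \<le> (dim over K) E"
      using dedekind_bound[OF K E KE dimE] by blast+
  qed
  then have "card I \<le> card (carrier (Gal R K E))" using card_mono IG by blast
  then have "card (carrier (Gal R K E)) = (dim over K) E" using le c(5) I_def by simp
  then show ?thesis
    using E KE c(1) by (simp add: galois_def finite_ext_def degree_ext_def over_def)
qed

lemma emb_restrict:
  assumes E: "subfield E R" and em: "emb R K E t" and KE: "K \<subseteq> E"
  shows "emb R K E (restrict t E)"
proof -
  have h: "t \<in> ring_hom (R\<lparr>carrier := E\<rparr>) R" using em by (simp add: emb_def)
  have "restrict t E \<in> ring_hom (R\<lparr>carrier := E\<rparr>) R"
  proof (rule ring_hom_memI)
    fix x assume "x \<in> carrier (R\<lparr>carrier := E\<rparr>)"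
    then show "restrict t E x \<in> carrier R" using hom_sub_closed[OF E h] by simp
  next
    note Ep = subringE[OF subfieldE(1)[OF E]]
    fix x y assume "x \<in> carrier (R\<lparr>carrier := E\<rparr>)" "y \<in> carrier (R\<lparr>carrier := E\<rparr>)"
    then have xy: "x \<in> E" "y \<in> E" by auto
    show "restrict t E (x \<otimes>\<^bsub>R\<lparr>carrier := E\<rparr>\<^esub> y) = restrict t E x \<otimes> restrict t E y"
      using hom_sub_mult[OF E h xy] xy Ep(6) by simp
    show "restrict t E (x \<oplus>\<^bsub>R\<lparr>carrier := E\<rparr>\<^esub> y) = restrict t E x \<oplus> restrict t E y"
      using hom_sub_add[OF E h xy] xy Ep(7) by simp
  next
    show "restrict t E \<one>\<^bsub>R\<lparr>carrier := E\<rparr>\<^esub> = \<one>"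
      using hom_sub_one[OF E h] subringE(3)[OF subfieldE(1)[OF E]] by simp
  qed
  then show ?thesis using em KE by (auto simp: emb_def)
qed

lemma normality:
  assumes K: "subfield K R" and gal: "galois R K N"
    and E: "subfield E R" and KE: "K \<subseteq> E" and EN: "E \<subseteq> N"
    and em: "emb R K E t"
  shows "\<exists>g\<in>carrier (Gal R K N). \<forall>x\<in>E. t x = g x"
proof (rule ccontr)
  assume nex: "\<not> (\<exists>g\<in>carrier (Gal R K N). \<forall>x\<in>E. t x = g x)"
  note gb = galois_basic[OF gal]
  note c = galois_count[OF K gb(1,2) gal E KE EN]
  define I where "I = (\<lambda>s. restrict s E) ` carrier (Gal R K N)"
  have finI: "finite I" using c(6) I_def by simp
  have notin: "restrict t E \<notin> I"
  proof
    assume "restrict t E \<in> I"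
    then obtain g where g: "g \<in> carrier (Gal R K N)" "restrict t E = restrict g E" using I_def by blast
    then have "\<forall>x\<in>E. t x = g x" by (metis restrict_apply')
    then show False using nex g(1) by blast
  qed
  define S where "S = insert (restrict t E) I"
  have dimE: "dimension ((dim over K) E) K E" using finite_dimensionE[OF K c(1)] .
  have "\<And>s. s \<in> S \<Longrightarrow> emb R K E s"
    using emb_restrict[OF E em KE] Gal_restrict_emb[OF gb(1) E EN KE] S_def I_def by blast
  moreover have "inj_on (\<lambda>s. restrict s E) S"
    unfolding S_def I_def by (rule inj_onI) auto
  ultimately have "card S \<le> (dim over K) E" using dedekind_bound[OF K E KE dimE] by blast
  moreover have "card S = Suc (card I)" using S_def finI notin by simp
  ultimately show False using c(5) I_def by simp
qed

lemma subfield_Inter: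
  assumes ne: "F \<noteq> {}" and sf: "\<And>A. A \<in> F \<Longrightarrow> subfield A R"
  shows "subfield (\<Inter>F) R"
proof (rule subfieldI')
  show "subring (\<Inter>F) R"
  proof (rule subringI)
    show "\<Inter>F \<subseteq> carrier R"
    proof -
      obtain A where "A \<in> F" using ne by blast
      then show ?thesis using subfieldE(3)[OF sf[of A]] by blast
    qed
    show "\<one> \<in> \<Inter>F"
    proof (rule InterI)
      fix A assume "A \<in> F" then show "\<one> \<in> A" using subringE(3)[OF subfieldE(1)[OF sf[of A]]] by simp
    qed
    fix h assume h: "h \<in> \<Inter>F"
    show "\<ominus> h \<in> \<Inter>F"
    proof (rule InterI)
      fix A assume A: "A \<in> F" then have "h \<in> A" using h by blast
      then show "\<ominus> h \<in> A" using subringE(5)[OF subfieldE(1)[OF sf[OF A]]] by simp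
    qed
  next
    fix h1 h2 assume h: "h1 \<in> \<Inter>F" "h2 \<in> \<Inter>F"
    show "h1 \<otimes> h2 \<in> \<Inter>F"
    proof (rule InterI)
      fix A assume A: "A \<in> F" then have "h1 \<in> A" "h2 \<in> A" using h by blast+
      then show "h1 \<otimes> h2 \<in> A" using subringE(6)[OF subfieldE(1)[OF sf[OF A]]] by simp
    qed
    show "h1 \<oplus> h2 \<in> \<Inter>F"
    proof (rule InterI)
      fix A assume A: "A \<in> F" then have "h1 \<in> A" "h2 \<in> A" using h by blast+
      then show "h1 \<oplus> h2 \<in> A" using subringE(7)[OF subfieldE(1)[OF sf[OF A]]] by simp
    qed
  qed
next
  fix k assume k: "k \<in> \<Inter>F - {\<zero>}"
  show "inv k \<in> \<Inter>F"
  proof (rule InterI)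
    fix A assume A: "A \<in> F" then have "k \<in> A - {\<zero>}" using k by blast
    then show "inv k \<in> A" using subfield_m_inv(1)[OF sf[OF A]] by blast
  qed
qed

lemma fix_generate:
  assumes K: "subfield K R" and M: "subfield M R" and KM: "K \<subseteq> M"
    and s: "s \<in> carrier (Gal R K M)" and LM: "L \<subseteq> M" and FM: "F \<subseteq> M"
    and fL: "\<And>x. x \<in> L \<Longrightarrow> s x = x" and fF: "\<And>x. x \<in> F \<Longrightarrow> s x = x"
  shows "\<And>x. x \<in> generate_field R (L \<union> F) \<Longrightarrow> s x = x"
proof -
  have sG: "{s} \<subseteq> carrier (Gal R K M)" using s by simp
  note FF = fixf_subfield[OF M K KM sG]
  have "L \<union> F \<subseteq> fixf M {s}" using LM FM fL fF by (auto simp: fixf_def)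
  moreover have "L \<union> F \<subseteq> carrier R" using LM FM subfieldE(3)[OF M] by blast
  ultimately have "generate_field R (L \<union> F) \<subseteq> fixf M {s}"
    using generate_field_min_subfield1 FF(1) by blast
  then show "\<And>x. x \<in> generate_field R (L \<union> F) \<Longrightarrow> s x = x" by (auto simp: fixf_def)
qed

end

lemma nat_copy:
  fixes XX :: "('c, 'd) monoid_scheme"
  assumes XX: "group XX" and fin: "finite (carrier XX)"
  shows "\<exists>A :: nat monoid. group A \<and> XX \<cong> A"
proof -
  obtain f where f: "bij_betw f (carrier XX) {0..<card (carrier XX)}"
    using ex_bij_betw_finite_nat[OF fin] by blast
  have inj: "inj_on f (carrier XX)" using f bij_betw_imp_inj_on by blast
  define g where "g = inv_into (carrier XX) f"
  have gf: "\<And>x. x \<in> carrier XX \<Longrightarrow> g (f x) = x" using inj g_def by (simp add: inv_into_f_f)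
  define A :: "nat monoid" where
    "A = \<lparr>carrier = f ` carrier XX, monoid.mult = (\<lambda>a b. f (g a \<otimes>\<^bsub>XX\<^esub> g b)), one = f \<one>\<^bsub>XX\<^esub>\<rparr>"
  have iso: "f \<in> iso XX A"
    unfolding iso_def hom_def
  proof (intro CollectI conjI)
    show "f \<in> carrier XX \<rightarrow> carrier A" using A_def by auto
    show "\<forall>x\<in>carrier XX. \<forall>y\<in>carrier XX. f (x \<otimes>\<^bsub>XX\<^esub> y) = f x \<otimes>\<^bsub>A\<^esub> f y"
      using A_def gf by simp
    show "bij_betw f (carrier XX) (carrier A)" using inj A_def by (simp add: bij_betw_def)
  qed
  have "group (A\<lparr>one := f \<one>\<^bsub>XX\<^esub>\<rparr>)" using group.iso_imp_img_group[OF XX iso] .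
  moreover have "A\<lparr>one := f \<one>\<^bsub>XX\<^esub>\<rparr> = A" using A_def by simp
  ultimately have "group A" by simp
  then show ?thesis using iso is_isoI by blast
qed

lemma internal_direct:
  assumes G: "group G" and fin: "finite (carrier G)"
    and N: "N \<lhd> G" and H: "H \<lhd> G" and NH: "N \<inter> H \<subseteq> {\<one>\<^bsub>G\<^esub>}"
    and card: "card N * card H = card (carrier G)"
  shows "\<exists>(A :: nat monoid) (B :: nat monoid). group A \<and> group B \<and>
           order A = card N \<and> order B = card H \<and> G \<cong> A \<times>\<times> B"
proof -
  interpret G: group G by (rule G)
  have sN: "subgroup N G" and sH: "subgroup H G" using N H by (auto simp: normal_def)
  interpret D: group_disjoint_sum G N H
    by (simp add: group_disjoint_sum_def G sN sH)
  have canc: "\<forall>x\<in>N. \<forall>y\<in>H. \<forall>x'\<in>N. \<forall>y'\<in>H. x \<otimes>\<^bsub>G\<^esub> y = x' \<otimes>\<^bsub>G\<^esub> y' \<longrightarrow> x = x' \<and> y = y'"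
    using D.cancel NH by blast
  have eqimg: "N <#>\<^bsub>G\<^esub> H = (\<lambda>(x, y). x \<otimes>\<^bsub>G\<^esub> y) ` (N \<times> H)"
    by (auto simp: set_mult_def)
  have injm: "inj_on (\<lambda>(x, y). x \<otimes>\<^bsub>G\<^esub> y) (N \<times> H)"
    using canc by (auto simp: inj_on_def)
  have finN: "finite N" and finH: "finite H"
    using fin subgroup.subset[OF sN] subgroup.subset[OF sH] finite_subset by metis+
  have "card (N <#>\<^bsub>G\<^esub> H) = card N * card H"
    using eqimg card_image[OF injm] card_cartesian_product by simp
  moreover have sub: "N <#>\<^bsub>G\<^esub> H \<subseteq> carrier G"
    using subgroup.subset[OF sN] subgroup.subset[OF sH] by (auto simp: set_mult_def)
  ultimately have NHG: "N <#>\<^bsub>G\<^esub> H = carrier G" using card_subset_eq[OF fin sub] card by simp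
  have iso: "(\<lambda>(x, y). x \<otimes>\<^bsub>G\<^esub> y) \<in> iso (subgroup_generated G N \<times>\<times> subgroup_generated G H) G"
    using G.iso_group_mul_gen[OF N H] NH NHG by simp
  have gP: "group (subgroup_generated G N \<times>\<times> subgroup_generated G H)"
    by (simp add: DirProd_group)
  have GP: "G \<cong> subgroup_generated G N \<times>\<times> subgroup_generated G H"
    using group.iso_sym[OF gP] iso is_isoI by blast
  have cN: "carrier (subgroup_generated G N) = N" using subgroup.carrier_subgroup_generated_subgroup[OF sN] .
  have cH: "carrier (subgroup_generated G H) = H" using subgroup.carrier_subgroup_generated_subgroup[OF sH] .
  obtain A :: "nat monoid" where A: "group A" "subgroup_generated G N \<cong> A"
    using nat_copy[of "subgroup_generated G N"] finN cN by auto
  obtain B :: "nat monoid" where B: "group B" "subgroup_generated G H \<cong> B"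
    using nat_copy[of "subgroup_generated G H"] finH cH by auto
  have "subgroup_generated G N \<times>\<times> subgroup_generated G H \<cong> A \<times>\<times> B"
    using group.DirProd_iso_trans[OF G.group_subgroup_generated A(2) B(2)] .
  then have "G \<cong> A \<times>\<times> B" using GP iso_trans by blast
  moreover have "order A = card N" using iso_same_card[OF A(2)] cN by (simp add: order_def)
  moreover have "order B = card H" using iso_same_card[OF B(2)] cH by (simp add: order_def)
  ultimately show ?thesis using A(1) B(1) by blast
qed

lemma external_direct:
  fixes A :: "'x monoid" and B :: "'y monoid"
  assumes G: "group G" and A: "group A" and B: "group B" and phi: "phi \<in> iso G (A \<times>\<times> B)"
  defines "HA \<equiv> {s \<in> carrier G. snd (phi s) = \<one>\<^bsub>B\<^esub>}"
    and "HB \<equiv> {s \<in> carrier G. fst (phi s) = \<one>\<^bsub>A\<^esub>}"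
  shows "HA \<lhd> G" "HB \<lhd> G" "card HA = card (carrier A)" "card HB = card (carrier B)"
    "HA \<inter> HB = {\<one>\<^bsub>G\<^esub>}"
    "\<And>s. s \<in> carrier G \<Longrightarrow> \<exists>a\<in>HA. \<exists>b\<in>HB. s = a \<otimes>\<^bsub>G\<^esub> b"
proof -
  interpret G: group G by (rule G)
  interpret A: group A by (rule A)
  interpret B: group B by (rule B)
  have P: "group (A \<times>\<times> B)" using DirProd_group[OF A B] .
  have hom: "phi \<in> hom G (A \<times>\<times> B)" using phi by (simp add: iso_def)
  have bij: "bij_betw phi (carrier G) (carrier A \<times> carrier B)" using phi by (simp add: iso_def)
  have inj: "inj_on phi (carrier G)" using bij bij_betw_imp_inj_on by blast
  have img: "phi ` carrier G = carrier A \<times> carrier B" using bij bij_betw_imp_surj_on by blast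
  have h1: "fst \<circ> phi \<in> hom G A" and h2: "snd \<circ> phi \<in> hom G B" using hom hom_pairwise by blast+
  interpret gh1: group_hom G A "fst \<circ> phi" by (simp add: group_hom_def group_hom_axioms_def G A h1)
  interpret gh2: group_hom G B "snd \<circ> phi" by (simp add: group_hom_def group_hom_axioms_def G B h2)
  have kA: "kernel G B (snd \<circ> phi) = HA" by (auto simp: kernel_def HA_def)
  have kB: "kernel G A (fst \<circ> phi) = HB" by (auto simp: kernel_def HB_def)
  show "HA \<lhd> G" using gh2.normal_kernel kA by simp
  show "HB \<lhd> G" using gh1.normal_kernel kB by simp
  have "phi ` HA = carrier A \<times> {\<one>\<^bsub>B\<^esub>}"
  proof
    show "phi ` HA \<subseteq> carrier A \<times> {\<one>\<^bsub>B\<^esub>}"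
    proof
      fix p assume "p \<in> phi ` HA"
      then obtain s where s: "s \<in> HA" "p = phi s" by blast
      then have "p \<in> carrier A \<times> carrier B" "snd p = \<one>\<^bsub>B\<^esub>" using img HA_def by auto
      then show "p \<in> carrier A \<times> {\<one>\<^bsub>B\<^esub>}" by (cases p) auto
    qed
    show "carrier A \<times> {\<one>\<^bsub>B\<^esub>} \<subseteq> phi ` HA"
    proof
      fix p assume "p \<in> carrier A \<times> {\<one>\<^bsub>B\<^esub>}"
      then have "p \<in> phi ` carrier G" "snd p = \<one>\<^bsub>B\<^esub>" using img by auto
      then show "p \<in> phi ` HA" using HA_def by auto
    qed
  qed
  moreover have "inj_on phi HA" using inj HA_def by (auto simp: inj_on_def)
  ultimately have "card HA = card (carrier A \<times> {\<one>\<^bsub>B\<^esub>})" by (metis card_image)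
  then show "card HA = card (carrier A)" by (simp add: card_cartesian_product)
  have "phi ` HB = {\<one>\<^bsub>A\<^esub>} \<times> carrier B"
  proof
    show "phi ` HB \<subseteq> {\<one>\<^bsub>A\<^esub>} \<times> carrier B"
    proof
      fix p assume "p \<in> phi ` HB"
      then obtain s where s: "s \<in> HB" "p = phi s" by blast
      then have "p \<in> carrier A \<times> carrier B" "fst p = \<one>\<^bsub>A\<^esub>" using img HB_def by auto
      then show "p \<in> {\<one>\<^bsub>A\<^esub>} \<times> carrier B" by (cases p) auto
    qed
    show "{\<one>\<^bsub>A\<^esub>} \<times> carrier B \<subseteq> phi ` HB"
    proof
      fix p assume "p \<in> {\<one>\<^bsub>A\<^esub>} \<times> carrier B"
      then have "p \<in> phi ` carrier G" "fst p = \<one>\<^bsub>A\<^esub>" using img by auto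
      then show "p \<in> phi ` HB" using HB_def by auto
    qed
  qed
  moreover have "inj_on phi HB" using inj HB_def by (auto simp: inj_on_def)
  ultimately have "card HB = card ({\<one>\<^bsub>A\<^esub>} \<times> carrier B)" by (metis card_image)
  then show "card HB = card (carrier B)" by (simp add: card_cartesian_product)
  have p1: "phi \<one>\<^bsub>G\<^esub> = (\<one>\<^bsub>A\<^esub>, \<one>\<^bsub>B\<^esub>)"
    using group_hom.hom_one[of G "A \<times>\<times> B" phi] G P hom by (simp add: group_hom_def group_hom_axioms_def)
  show "HA \<inter> HB = {\<one>\<^bsub>G\<^esub>}"
  proof
    show "HA \<inter> HB \<subseteq> {\<one>\<^bsub>G\<^esub>}"
    proof
      fix s assume s: "s \<in> HA \<inter> HB"
      then have "phi s = phi \<one>\<^bsub>G\<^esub>" "s \<in> carrier G" using p1 HA_def HB_def by (auto simp: prod_eq_iff)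
      then show "s \<in> {\<one>\<^bsub>G\<^esub>}" using inj by (auto simp: inj_on_def)
    qed
    show "{\<one>\<^bsub>G\<^esub>} \<subseteq> HA \<inter> HB" using p1 HA_def HB_def by simp
  qed
  fix s assume s: "s \<in> carrier G"
  obtain x y where xy: "phi s = (x, y)" by (cases "phi s")
  have "(x, y) \<in> carrier A \<times> carrier B" using img s xy by (metis imageI)
  then have xA: "x \<in> carrier A" and yB: "y \<in> carrier B" by auto
  have "(x, \<one>\<^bsub>B\<^esub>) \<in> phi ` carrier G" using img xA by simp
  then obtain a where a0: "a \<in> carrier G" "(x, \<one>\<^bsub>B\<^esub>) = phi a" by (rule imageE)
  then have a: "a \<in> carrier G" "phi a = (x, \<one>\<^bsub>B\<^esub>)" by simp_all
  have "(\<one>\<^bsub>A\<^esub>, y) \<in> phi ` carrier G" using img yB by simp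
  then obtain b where b0: "b \<in> carrier G" "(\<one>\<^bsub>A\<^esub>, y) = phi b" by (rule imageE)
  then have b: "b \<in> carrier G" "phi b = (\<one>\<^bsub>A\<^esub>, y)" by simp_all
  have "phi (a \<otimes>\<^bsub>G\<^esub> b) = phi a \<otimes>\<^bsub>A \<times>\<times> B\<^esub> phi b" using hom a(1) b(1) by (simp add: hom_def)
  also have "\<dots> = (x, y)" using a b xA yB by simp
  finally have "a \<otimes>\<^bsub>G\<^esub> b = s" using inj a(1) b(1) s xy by (simp add: inj_on_def)
  moreover have "a \<in> HA" "b \<in> HB" using a b HA_def HB_def by auto
  ultimately show "\<exists>a\<in>HA. \<exists>b\<in>HB. s = a \<otimes>\<^bsub>G\<^esub> b" by blast
qed


context field
begin

lemma Gal_apply_mult: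
  assumes "s \<in> carrier (Gal R K M)" "t \<in> carrier (Gal R K M)" "x \<in> M"
  shows "(s \<otimes>\<^bsub>Gal R K M\<^esub> t) x = s (t x)"
  using mult_Gal[OF assms(1,2)] assms(3) by (simp add: compose_def)

lemma Gal_apply_inv:
  assumes M: "subfield M R" and KM: "K \<subseteq> M" and s: "s \<in> carrier (Gal R K M)" and x: "x \<in> M"
  shows "s ((inv\<^bsub>Gal R K M\<^esub> s) x) = x" and "(inv\<^bsub>Gal R K M\<^esub> s) (s x) = x"
proof -
  have bij: "bij_betw s M M" using s by (simp add: carrier_Gal Bij_def)
  have inj: "inj_on s M" using bij_betw_imp_inj_on[OF bij] .
  have img: "s ` M = M" using bij_betw_imp_surj_on[OF bij] .
  have sx: "s x \<in> M" using Gal_closed[OF s x] .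
  show "s ((inv\<^bsub>Gal R K M\<^esub> s) x) = x"
    using inv_Gal[OF M KM s] x img by (simp add: f_inv_into_f)
  show "(inv\<^bsub>Gal R K M\<^esub> s) (s x) = x"
    using inv_Gal[OF M KM s] x sx inj by (simp add: inv_into_f_f)
qed

lemma Gal_ext:
  assumes "s \<in> carrier (Gal R K M)" "t \<in> carrier (Gal R K M)" "\<And>x. x \<in> M \<Longrightarrow> s x = t x"
  shows "s = t"
proof -
  have "s \<in> extensional M" "t \<in> extensional M" using assms(1,2) by (auto simp: carrier_Gal Bij_def)
  then show ?thesis using assms(3) by (rule extensionalityI)
qed

lemma Gal_eq_one:
  assumes M: "subfield M R" and KM: "K \<subseteq> M" and u: "u \<in> carrier (Gal R K M)"
    and fx: "\<And>x. x \<in> M \<Longrightarrow> u x = x"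
  shows "u = \<one>\<^bsub>Gal R K M\<^esub>"
proof (rule Gal_ext[OF u])
  show "\<one>\<^bsub>Gal R K M\<^esub> \<in> carrier (Gal R K M)"
    using monoid.one_closed[OF group.is_monoid[OF Gal_group[OF M KM]]] .
  show "\<And>x. x \<in> M \<Longrightarrow> u x = \<one>\<^bsub>Gal R K M\<^esub> x" using fx by (simp add: one_Gal)
qed

lemma stable_normal:
  assumes M: "subfield M R" and KE: "K \<subseteq> E" and EM: "E \<subseteq> M"
    and st: "\<And>s x. s \<in> carrier (Gal R K M) \<Longrightarrow> x \<in> E \<Longrightarrow> s x \<in> E"
  shows "carrier (Gal R E M) \<lhd> Gal R K M"
proof -
  have KM: "K \<subseteq> M" using KE EM by blast
  interpret G: group "Gal R K M" using Gal_group[OF M KM] .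
  show ?thesis
    unfolding G.normal_inv_iff
  proof (intro conjI ballI)
    show "subgroup (carrier (Gal R E M)) (Gal R K M)" using Gal_sub_subgroup[OF M KE EM] .
  next
    fix s h assume s: "s \<in> carrier (Gal R K M)" and h: "h \<in> carrier (Gal R E M)"
    have hG: "h \<in> carrier (Gal R K M)" using h Gal_mono[OF KE] by blast
    have iG: "inv\<^bsub>Gal R K M\<^esub> s \<in> carrier (Gal R K M)" using s by simp
    have hE: "\<And>x. x \<in> E \<Longrightarrow> h x = x" using h by (auto simp: carrier_Gal)
    have "(s \<otimes>\<^bsub>Gal R K M\<^esub> h \<otimes>\<^bsub>Gal R K M\<^esub> inv\<^bsub>Gal R K M\<^esub> s) x = x" if x: "x \<in> E" for x
    proof -
      have xM: "x \<in> M" using x EM by blast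
      have ix: "(inv\<^bsub>Gal R K M\<^esub> s) x \<in> E" using st[OF iG x] .
      have "(s \<otimes>\<^bsub>Gal R K M\<^esub> h \<otimes>\<^bsub>Gal R K M\<^esub> inv\<^bsub>Gal R K M\<^esub> s) x
          = s (h ((inv\<^bsub>Gal R K M\<^esub> s) x))"
        using Gal_apply_mult[OF G.m_closed[OF s hG] iG xM] Gal_apply_mult[OF s hG] Gal_closed[OF iG xM]
        by simp
      also have "\<dots> = s ((inv\<^bsub>Gal R K M\<^esub> s) x)" using hE[OF ix] by simp
      also have "\<dots> = x" using Gal_apply_inv(1)[OF M KM s xM] .
      finally show ?thesis .
    qed
    then show "s \<otimes>\<^bsub>Gal R K M\<^esub> h \<otimes>\<^bsub>Gal R K M\<^esub> inv\<^bsub>Gal R K M\<^esub> s \<in> carrier (Gal R E M)"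
      using Gal_E_char[OF KE, of M] s hG iG by auto
  qed
qed

lemma fixf_normal_stable:
  assumes M: "subfield M R" and KM: "K \<subseteq> M" and H: "H \<lhd> Gal R K M"
    and s: "s \<in> carrier (Gal R K M)" and x: "x \<in> fixf M H"
  shows "s x \<in> fixf M H"
proof -
  interpret G: group "Gal R K M" using Gal_group[OF M KM] .
  have sH: "subgroup H (Gal R K M)" using H by (simp add: normal_def)
  have HG: "H \<subseteq> carrier (Gal R K M)" using subgroup.subset[OF sH] .
  have xM: "x \<in> M" and xf: "\<And>h. h \<in> H \<Longrightarrow> h x = x" using x by (auto simp: fixf_def)
  have iG: "inv\<^bsub>Gal R K M\<^esub> s \<in> carrier (Gal R K M)" using s by simp
  show ?thesis
  proof (rule fixfI)
    show "s x \<in> M" using Gal_closed[OF s xM] .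
  next
    fix h assume h: "h \<in> H"
    have hG: "h \<in> carrier (Gal R K M)" using h HG by blast
    define h' where "h' = inv\<^bsub>Gal R K M\<^esub> s \<otimes>\<^bsub>Gal R K M\<^esub> h \<otimes>\<^bsub>Gal R K M\<^esub> inv\<^bsub>Gal R K M\<^esub> (inv\<^bsub>Gal R K M\<^esub> s)"
    have h'H: "h' \<in> H" using H iG h h'_def by (simp add: G.normal_inv_iff)
    have h'G: "h' \<in> carrier (Gal R K M)" using h'H HG by blast
    have "s \<otimes>\<^bsub>Gal R K M\<^esub> h' = h \<otimes>\<^bsub>Gal R K M\<^esub> s"
      using h'_def s hG by (simp add: G.m_assoc[symmetric])
    then have "s (h' x) = h (s x)"
      using Gal_apply_mult[OF s h'G xM] Gal_apply_mult[OF hG s xM] by simp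
    then show "h (s x) = s x" using xf[OF h'H] by simp
  qed
qed

lemma lin_disj:
  assumes K: "subfield K R" and gal: "galois R K M"
    and L: "subfield L R" and KL: "K \<subseteq> L" and LM: "L \<subseteq> M"
    and F: "subfield F R" and KF: "K \<subseteq> F" and FM: "F \<subseteq> M"
    and fixL: "fixf M (carrier (Gal R L M)) = L"
    and Fst: "\<And>h x. h \<in> carrier (Gal R L M) \<Longrightarrow> x \<in> F \<Longrightarrow> h x \<in> F"
    and LFK: "L \<inter> F \<subseteq> K"
    and us: "set us \<subseteq> L" and ind: "independent K us"
  shows "independent F us"
proof (rule ccontr)
  assume dep: "\<not> independent F us"
  note gb = galois_basic[OF gal]
  note M = gb(1)
  have MS: "M \<subseteq> carrier R" using subfieldE(3)[OF M] .
  have FS: "F \<subseteq> carrier R" using subfieldE(3)[OF F] .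
  note Fp = subringE[OF subfieldE(1)[OF F]]
  have usC: "set us \<subseteq> carrier R" using us LM MS by blast
  define k where "k = length us"
  have uL: "\<And>j. j < k \<Longrightarrow> us ! j \<in> L" using us k_def nth_mem by blast
  have uC: "\<And>j. j < k \<Longrightarrow> us ! j \<in> carrier R" using usC k_def nth_mem by blast
  obtain Ks where Ks: "length Ks = length us" "combine Ks us = \<zero>" "set Ks \<subseteq> F" "set Ks \<noteq> {\<zero>}"
    using dependent_imp_non_trivial_combine[OF F usC dep] by blast
  have "us \<noteq> []" using dep by auto
  then have "Ks \<noteq> []" using Ks(1) by auto
  then obtain j0 where j0: "j0 < k" "Ks ! j0 \<noteq> \<zero>" using Ks(1,4) k_def
    by (metis in_set_conv_nth insertI1 set_empty2 subsetI subset_singletonD)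
  define P where "P = (\<lambda>x. (\<forall>j<k. x j \<in> F) \<and> (\<Oplus>j\<in>{..<k}. x j \<otimes> us ! j) = \<zero>)"
  have "P (\<lambda>j. Ks ! j)"
    unfolding P_def
  proof
    show "\<forall>j<k. Ks ! j \<in> F" using Ks(1,3) k_def nth_mem by (metis subsetD)
    show "(\<Oplus>j\<in>{..<k}. Ks ! j \<otimes> us ! j) = \<zero>"
      using combine_finsum[OF _ usC Ks(1)] Ks(2,3) FS k_def by auto
  qed
  obtain x where x: "P x" "\<exists>j<k. x j \<noteq> \<zero>"
    "\<And>y. P y \<and> {j. j < k \<and> y j \<noteq> \<zero>} \<subset> {j. j < k \<and> x j \<noteq> \<zero>} \<Longrightarrow> (\<forall>j<k. y j = \<zero>)"
    using min_supp[of P "\<lambda>j. Ks ! j" k] \<open>P (\<lambda>j. Ks ! j)\<close> j0 by blast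
  have xF: "\<And>j. j < k \<Longrightarrow> x j \<in> F" using x(1) P_def by blast
  obtain a where a: "a < k" "x a \<noteq> \<zero>" using x(2) by blast
  define c where "c = inv (x a)"
  have cF: "c \<in> F" "c \<otimes> x a = \<one>" "c \<noteq> \<zero>"
    using subfield_m_inv[OF F, of "x a"] xF[OF a(1)] a(2) c_def by auto
  have cC: "c \<in> carrier R" using cF FS by blast
  define z where "z = (\<lambda>j. c \<otimes> x j)"
  have zF: "\<And>j. j < k \<Longrightarrow> z j \<in> F" using z_def cF xF Fp(6) by simp
  have zC: "\<And>j. j < k \<Longrightarrow> z j \<in> carrier R" using zF FS by blast
  have za: "z a = \<one>" using z_def cF by simp
  have xC: "\<And>j. j < k \<Longrightarrow> x j \<in> carrier R" using xF FS by blast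
  have zsupp: "{j. j < k \<and> z j \<noteq> \<zero>} = {j. j < k \<and> x j \<noteq> \<zero>}"
    using z_def cF cC xC integral_iff by auto
  have sumz: "(\<Oplus>j\<in>{..<k}. z j \<otimes> us ! j) = \<zero>"
  proof -
    have "c \<otimes> (\<Oplus>j\<in>{..<k}. x j \<otimes> us ! j) = (\<Oplus>j\<in>{..<k}. c \<otimes> (x j \<otimes> us ! j))"
      by (rule finsum_rdistr) (use cC xC uC in auto)
    also have "\<dots> = (\<Oplus>j\<in>{..<k}. z j \<otimes> us ! j)"
      by (rule finsum_cong') (use cC xC uC z_def in \<open>auto simp: m_assoc\<close>)
    finally show ?thesis using x(1) cC unfolding P_def by simp
  qed
  have zfix: "h (z j) = z j" if h: "h \<in> carrier (Gal R L M)" and j: "j < k" for h j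
  proof -
    have hR: "h \<in> ring_hom (R\<lparr>carrier := M\<rparr>) R"
      using h ring_hom_sub_to_R[OF M] by (auto simp: carrier_Gal)
    have hL: "\<And>v. v \<in> L \<Longrightarrow> h v = v" using h by (auto simp: carrier_Gal)
    define y where "y = (\<lambda>j. z j \<ominus> h (z j))"
    have hzF: "\<And>j. j < k \<Longrightarrow> h (z j) \<in> F" using Fst[OF h zF] .
    have hzC: "\<And>j. j < k \<Longrightarrow> h (z j) \<in> carrier R" using hzF FS by blast
    have zM: "\<And>j. j < k \<Longrightarrow> z j \<in> M" using zF FM by blast
    have uM: "\<And>j. j < k \<Longrightarrow> us ! j \<in> M" using uL LM by blast
    note Mp = subringE[OF subfieldE(1)[OF M]]
    have Py: "P y"
      unfolding P_def
    proof
      show "\<forall>j<k. y j \<in> F" using y_def zF hzF Fp(5,7) by (simp add: a_minus_def)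
      have "(\<Oplus>j\<in>{..<k}. h (z j) \<otimes> us ! j) = (\<Oplus>j\<in>{..<k}. h (z j \<otimes> us ! j))"
        by (rule finsum_cong') (use hom_sub_mult[OF M hR zM uM] hL uL hzC uC in auto)
      also have "\<dots> = h (\<Oplus>j\<in>{..<k}. z j \<otimes> us ! j)"
        by (rule hom_finsum_sub[OF M hR, symmetric]) (use zM uM Mp(6) in auto)
      also have "\<dots> = \<zero>" using sumz hom_sub_zero[OF M hR] by simp
      finally have s2: "(\<Oplus>j\<in>{..<k}. h (z j) \<otimes> us ! j) = \<zero>" .
      have "(\<Oplus>j\<in>{..<k}. y j \<otimes> us ! j) = (\<Oplus>j\<in>{..<k}. z j \<otimes> us ! j \<ominus> h (z j) \<otimes> us ! j)"
      proof (rule finsum_cong')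
        fix j assume "j \<in> {..<k}" then have j: "j < k" by simp
        have c: "z j \<in> carrier R" "h (z j) \<in> carrier R" "us ! j \<in> carrier R"
          using zC[OF j] hzC[OF j] uC[OF j] by auto
        then show "y j \<otimes> us ! j = z j \<otimes> us ! j \<ominus> h (z j) \<otimes> us ! j" unfolding y_def by algebra
      qed (use zC hzC uC in auto)
      also have "\<dots> = (\<Oplus>j\<in>{..<k}. z j \<otimes> us ! j) \<ominus> (\<Oplus>j\<in>{..<k}. h (z j) \<otimes> us ! j)"
        by (rule finsum_diff) (use zC hzC uC in auto)
      finally show "(\<Oplus>j\<in>{..<k}. y j \<otimes> us ! j) = \<zero>" using sumz s2 by simp
    qed
    have "{j. j < k \<and> y j \<noteq> \<zero>} \<subseteq> {j. j < k \<and> x j \<noteq> \<zero>} - {a}"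
    proof
      fix j assume j: "j \<in> {j. j < k \<and> y j \<noteq> \<zero>}"
      have "j \<noteq> a"
      proof
        assume "j = a"
        then have "y j = \<one> \<ominus> \<one>" using y_def za hom_sub_one[OF M hR] by simp
        then show False using j by simp
      qed
      moreover have "z j \<noteq> \<zero>"
      proof
        assume "z j = \<zero>"
        then have "y j = \<zero> \<ominus> \<zero>" using y_def hom_sub_zero[OF M hR] by simp
        then show False using j by simp
      qed
      ultimately show "j \<in> {j. j < k \<and> x j \<noteq> \<zero>} - {a}" using j zsupp by blast
    qed
    then have "{j. j < k \<and> y j \<noteq> \<zero>} \<subset> {j. j < k \<and> x j \<noteq> \<zero>}" using a by blast
    then have "y j = \<zero>" using x(3)[of y] Py j by blast
    then show ?thesis using y_def zC[OF j] hzC[OF j] by (metis r_right_minus_eq)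
  qed
  have zK: "\<And>j. j < k \<Longrightarrow> z j \<in> K"
  proof -
    fix j assume j: "j < k"
    have "z j \<in> fixf M (carrier (Gal R L M))"
      using zfix[OF _ j] zF[OF j] FM by (auto simp: fixf_def)
    then have "z j \<in> L" using fixL by simp
    then show "z j \<in> K" using LFK zF[OF j] by blast
  qed
  define Ks' where "Ks' = map z [0..<k]"
  have KsK: "set Ks' \<subseteq> K" using zK Ks'_def by auto
  have "combine Ks' us = (\<Oplus>j\<in>{..<length us}. Ks' ! j \<otimes> us ! j)"
    by (rule combine_finsum) (use KsK subfieldE(3)[OF K] usC Ks'_def k_def in auto)
  also have "\<dots> = (\<Oplus>j\<in>{..<k}. z j \<otimes> us ! j)"
    by (rule finsum_cong') (use Ks'_def k_def zC uC in auto)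
  finally have "combine Ks' us = \<zero>" using sumz by simp
  then have "set (take (length us) Ks') \<subseteq> {\<zero>}"
    using independent_imp_trivial_combine[OF K ind KsK] by blast
  then have "z a = \<zero>" using a Ks'_def k_def by (auto simp: image_subset_iff)
  then show False using za by simp
qed

end

context field
begin

lemma fwd:
  assumes K: "subfield K R" and gal: "galois R K M"
    and sc: "strong_cluster_magnification_via R K L M F" and FK: "F \<noteq> K"
  shows "galois R K L"
    and "\<exists>(A :: nat monoid) (B :: nat monoid). group A \<and> group B \<and>
              carrier A \<noteq> {\<one>\<^bsub>A\<^esub>} \<and> carrier B \<noteq> {\<one>\<^bsub>B\<^esub>} \<and> order A > 2 \<and>
              Gal R K M \<cong> A \<times>\<times> B"
proof -
  have fL: "finite_ext R K L" and LM: "L \<subseteq> M" and deg: "degree_ext R K L > 2"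
    and gF: "galois R K F" and ld: "lin_disjoint R K (galois_closure R K L) F"
    and cp: "compositum R L F = M"
    using sc by (auto simp: strong_cluster_magnification_via_def)
  have L: "subfield L R" and KL: "K \<subseteq> L" and fdL: "finite_dimension K L"
    using fL by (auto simp: finite_ext_def)
  have degL: "(dim over K) L > 2" using deg by (simp add: degree_ext_def over_def)
  note gb = galois_basic[OF gal]
  note M = gb(1) and KM = gb(2)
  note gbF = galois_basic[OF gF]
  note F = gbF(1) and KF = gbF(2)
  interpret G: group "Gal R K M" using Gal_group[OF M KM] .
  have LFc: "L \<union> F \<subseteq> carrier R" using subfieldE(3)[OF L] subfieldE(3)[OF F] by blast
  have genM: "generate_field R (L \<union> F) = M" using cp by (simp add: compositum_def)
  have FM: "F \<subseteq> M" using generate_fieldE(2)[OF LFc refl] genM by blast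
  define NN where "NN = {N. galois R K N \<and> L \<subseteq> N}"
  define T where "T = galois_closure R K L"
  have T_eq: "T = \<Inter>NN" using T_def NN_def by (simp add: galois_closure_def)
  have MNN: "M \<in> NN" using NN_def gal LM by simp
  have TM: "T \<subseteq> M" using T_eq MNN by blast
  have LT: "L \<subseteq> T" using T_eq NN_def by blast
  have T: "subfield T R"
    using subfield_Inter[of NN] MNN NN_def galois_basic(1) T_eq by blast
  have KT: "K \<subseteq> T" using KL LT by blast
  have Tst: "s x \<in> T" if s: "s \<in> carrier (Gal R K M)" and x: "x \<in> T" for s x
  proof -
    have "s x \<in> N" if N: "N \<in> NN" for N
    proof -
      have gN: "galois R K N" using N NN_def by simp
      note gbN = galois_basic[OF gN]
      define E where "E = \<Inter>{N, M}"
      have E: "subfield E R" using subfield_Inter[of "{N, M}"] gbN(1) M E_def by blast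
      have KE: "K \<subseteq> E" using gbN(2) KM E_def by auto
      have EN: "E \<subseteq> N" and EM: "E \<subseteq> M" using E_def by auto
      have em: "emb R K E (restrict s E)" using Gal_restrict_emb[OF M E EM KE s] .
      obtain g where g: "g \<in> carrier (Gal R K N)" "\<forall>y\<in>E. restrict s E y = g y"
        using normality[OF K gN E KE EN em] by blast
      have xE: "x \<in> E" using x T_eq N TM E_def by auto
      have "s x = g x" using g(2) xE by simp
      then show "s x \<in> N" using Gal_closed[OF g(1)] xE EN by auto
    qed
    then show ?thesis using T_eq by blast
  qed
  have gT: "galois R K T" by (rule stable_galois[OF K gal T KT TM]) (rule Tst)
  have fdT: "finite_dimension K T" using galois_basic(3)[OF gT] .
  note cF = galois_count[OF K M KM gal F KF FM]
  have dimFM: "dimension ((dim over F) M) F M" using finite_dimensionE[OF F cF(2)] .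
  have a: "(dim over K) T \<le> (dim over F) M"
  proof -
    obtain us where us: "set us \<subseteq> carrier R" "independent K us" "length us = (dim over K) T" "Span K us = T"
      using exists_base[OF K finite_dimensionE[OF K fdT]] by blast
    have usT: "set us \<subseteq> T" using Span_base_incl[OF K us(1)] us(4) by simp
    have "independent F us" using ld usT us(2) T_def by (simp add: lin_disjoint_def)
    then have "length us \<le> (dim over F) M"
      using independent_length_le_dimension[OF F dimFM] usT TM by blast
    then show ?thesis using us(3) by simp
  qed
  define HF where "HF = carrier (Gal R F M)"
  have HFG: "HF \<subseteq> carrier (Gal R K M)" using Gal_mono[OF KF] HF_def by simp
  have dimL: "dimension ((dim over K) L) K L" using finite_dimensionE[OF K fdL] .
  have agree: "s = t" if st: "s \<in> HF" "t \<in> HF" and eq: "restrict s L = restrict t L" for s t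
  proof -
    have sG: "s \<in> carrier (Gal R K M)" and tG: "t \<in> carrier (Gal R K M)" using st HFG by auto
    have sF: "\<And>x. x \<in> F \<Longrightarrow> s x = x" and tF: "\<And>x. x \<in> F \<Longrightarrow> t x = x"
      using st HF_def by (auto simp: carrier_Gal)
    define u where "u = inv\<^bsub>Gal R K M\<^esub> s \<otimes>\<^bsub>Gal R K M\<^esub> t"
    have iG: "inv\<^bsub>Gal R K M\<^esub> s \<in> carrier (Gal R K M)" using sG by simp
    have uG: "u \<in> carrier (Gal R K M)" using u_def iG tG by simp
    have uapp: "\<And>x. x \<in> M \<Longrightarrow> u x = (inv\<^bsub>Gal R K M\<^esub> s) (t x)"
      using Gal_apply_mult[OF iG tG] u_def by simp
    have uL: "\<And>x. x \<in> L \<Longrightarrow> u x = x"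
    proof -
      fix x assume x: "x \<in> L"
      have "t x = s x" using eq x by (metis restrict_apply')
      then show "u x = x" using uapp x LM Gal_apply_inv(2)[OF M KM sG] by auto
    qed
    have uF: "\<And>x. x \<in> F \<Longrightarrow> u x = x"
    proof -
      fix x assume x: "x \<in> F"
      have "t x = s x" using sF tF x by simp
      then show "u x = x" using uapp x FM Gal_apply_inv(2)[OF M KM sG] by auto
    qed
    have uM: "\<And>x. x \<in> M \<Longrightarrow> u x = x"
      using fix_generate[OF K M KM uG LM FM uL uF] genM by blast
    have "\<And>x. x \<in> M \<Longrightarrow> s x = t x"
    proof -
      fix x assume x: "x \<in> M"
      have "(inv\<^bsub>Gal R K M\<^esub> s) (t x) = x" using uM[OF x] uapp[OF x] by simp
      then have "s ((inv\<^bsub>Gal R K M\<^esub> s) (t x)) = s x" by simp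
      then show "s x = t x" using Gal_apply_inv(1)[OF M KM sG Gal_closed[OF tG x]] by simp
    qed
    then show "s = t" using Gal_ext[OF sG tG] by blast
  qed
  have b: "(dim over F) M \<le> (dim over K) L"
  proof -
    define I where "I = (\<lambda>s. restrict s L) ` HF"
    have "\<And>t. t \<in> I \<Longrightarrow> emb R K L t" using Gal_restrict_emb[OF M L LM KL] HFG I_def by blast
    moreover have "inj_on (\<lambda>s. restrict s L) I" unfolding I_def by (rule inj_onI) auto
    ultimately have "card I \<le> (dim over K) L" using dedekind_bound[OF K L KL dimL] by blast
    moreover have "inj_on (\<lambda>s. restrict s L) HF" using agree by (auto simp: inj_on_def)
    ultimately have "card HF \<le> (dim over K) L" using I_def card_image by metis
    then show ?thesis using cF(4) HF_def by simp
  qed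
  have fdLT: "finite_dimension L T" using findim_intermediate[OF K L T KL LT fdT] .
  have towT: "(dim over K) T = (dim over K) L * (dim over L) T"
    using telescopic_base_dim(2)[OF K L fdL fdLT] .
  have p: "(dim over L) T \<ge> 1" using dim_pos[OF L T finite_dimensionE[OF L fdLT]] .
  have "(dim over L) T = 1"
  proof (rule ccontr)
    assume "(dim over L) T \<noteq> 1"
    then have "(dim over L) T \<ge> 2" using p by simp
    then have m: "(dim over K) L * (dim over L) T \<ge> (dim over K) L * 2" by (rule mult_le_mono2)
    show False using towT a b degL m by linarith
  qed
  then have "dimension 1 L T" using finite_dimensionE[OF L fdLT] by simp
  then have TL: "T = L" using dim_one_eq[OF L T LT] by simp
  then show gL: "galois R K L" using gT by simp
  have FMdim: "(dim over F) M = (dim over K) L" using a b TL by simp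
  define HL where "HL = carrier (Gal R L M)"
  have Lst: "\<And>s x. s \<in> carrier (Gal R K M) \<Longrightarrow> x \<in> L \<Longrightarrow> s x \<in> L" using Tst TL by blast
  have Fst: "s x \<in> F" if s: "s \<in> carrier (Gal R K M)" and x: "x \<in> F" for s x
  proof -
    have em: "emb R K F (restrict s F)" using Gal_restrict_emb[OF M F FM KF s] .
    obtain g where g: "g \<in> carrier (Gal R K F)" "\<forall>y\<in>F. restrict s F y = g y"
      using normality[OF K gF F KF subset_refl em] by blast
    then show ?thesis using x Gal_closed[OF g(1) x] by simp
  qed
  have nL: "HL \<lhd> Gal R K M" unfolding HL_def by (rule stable_normal[OF M KL LM]) (rule Lst)
  have nF: "HF \<lhd> Gal R K M" unfolding HF_def by (rule stable_normal[OF M KF FM]) (rule Fst)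
  have inter: "HF \<inter> HL \<subseteq> {\<one>\<^bsub>Gal R K M\<^esub>}"
  proof
    fix u assume u: "u \<in> HF \<inter> HL"
    then have uG: "u \<in> carrier (Gal R K M)" using HFG by blast
    have "\<And>x. x \<in> L \<Longrightarrow> u x = x" "\<And>x. x \<in> F \<Longrightarrow> u x = x"
      using u HF_def HL_def by (auto simp: carrier_Gal)
    then have "\<And>x. x \<in> M \<Longrightarrow> u x = x" using fix_generate[OF K M KM uG LM FM] genM by blast
    then show "u \<in> {\<one>\<^bsub>Gal R K M\<^esub>}" using Gal_eq_one[OF M KM uG] by simp
  qed
  note cL = galois_count[OF K M KM gal L KL LM]
  have cardprod: "card HF * card HL = card (carrier (Gal R K M))"
    using cF(4) cL(4) cL(3) FMdim HF_def HL_def gb(4) by simp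
  obtain A B :: "nat monoid" where AB: "group A" "group B" "order A = card HF" "order B = card HL"
      "Gal R K M \<cong> A \<times>\<times> B"
    using internal_direct[OF G.is_group cF(6) nF nL inter cardprod] by blast
  have oA: "order A > 2" using AB(3) cF(4) HF_def FMdim degL by simp
  have "(dim over K) F * (dim over K) L = (dim over K) L * (dim over L) M"
    using cF(3) cL(3) FMdim by (metis mult.commute)
  then have FLM: "(dim over K) F = (dim over L) M" using degL by simp
  have "(dim over K) F \<noteq> 1"
  proof
    assume "(dim over K) F = 1"
    then have "dimension 1 K F" using finite_dimensionE[OF K gbF(3)] by simp
    then show False using dim_one_eq[OF K F KF] FK by simp
  qed
  moreover have "(dim over K) F \<ge> 1" using dim_pos[OF K F finite_dimensionE[OF K gbF(3)]] .
  ultimately have oB: "order B \<ge> 2" using AB(4) cL(4) HL_def FLM by simp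
  have nA: "carrier A \<noteq> {\<one>\<^bsub>A\<^esub>}" using oA by (auto simp: order_def)
  have nB: "carrier B \<noteq> {\<one>\<^bsub>B\<^esub>}" using oB by (auto simp: order_def)
  show "\<exists>(A :: nat monoid) (B :: nat monoid). group A \<and> group B \<and>
              carrier A \<noteq> {\<one>\<^bsub>A\<^esub>} \<and> carrier B \<noteq> {\<one>\<^bsub>B\<^esub>} \<and> order A > 2 \<and>
              Gal R K M \<cong> A \<times>\<times> B"
    using AB(1,2,5) nA nB oA by blast
qed

end

context field
begin

lemma bwd:
  fixes A B :: "nat monoid"
  assumes K: "subfield K R" and gal: "galois R K M"
    and A: "group A" and B: "group B" and nA: "carrier A \<noteq> {\<one>\<^bsub>A\<^esub>}" and nB: "carrier B \<noteq> {\<one>\<^bsub>B\<^esub>}"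
    and oA: "order A > 2" and iso: "Gal R K M \<cong> A \<times>\<times> B"
  shows "\<exists>L. nontrivial_strong_cluster_magnification R K L M"
proof -
  note gb = galois_basic[OF gal]
  note M = gb(1) and KM = gb(2)
  interpret G: group "Gal R K M" using Gal_group[OF M KM] .
  obtain phi where phi: "phi \<in> iso (Gal R K M) (A \<times>\<times> B)" using iso by (auto simp: is_iso_def)
  define HA where "HA = {s \<in> carrier (Gal R K M). snd (phi s) = \<one>\<^bsub>B\<^esub>}"
  define HB where "HB = {s \<in> carrier (Gal R K M). fst (phi s) = \<one>\<^bsub>A\<^esub>}"
  note ed = external_direct[OF G.is_group A B phi, folded HA_def HB_def]
  have sHA: "subgroup HA (Gal R K M)" and sHB: "subgroup HB (Gal R K M)"
    using ed(1,2) by (auto simp: normal_def)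
  define L where "L = fixf M HB"
  define F where "F = fixf M HA"
  note gfB = Gal_fixf[OF K gal sHB, folded L_def]
  note gfA = Gal_fixf[OF K gal sHA, folded F_def]
  have L: "subfield L R" and KL: "K \<subseteq> L" and LM: "L \<subseteq> M" using gfB by auto
  have F: "subfield F R" and KF: "K \<subseteq> F" and FM: "F \<subseteq> M" using gfA by auto
  have Lst: "\<And>s x. s \<in> carrier (Gal R K M) \<Longrightarrow> x \<in> L \<Longrightarrow> s x \<in> L"
    using fixf_normal_stable[OF M KM ed(2)] L_def by blast
  have Fst: "\<And>s x. s \<in> carrier (Gal R K M) \<Longrightarrow> x \<in> F \<Longrightarrow> s x \<in> F"
    using fixf_normal_stable[OF M KM ed(1)] F_def by blast
  have gL: "galois R K L" by (rule stable_galois[OF K gal L KL LM]) (rule Lst)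
  have gF: "galois R K F" by (rule stable_galois[OF K gal F KF FM]) (rule Fst)
  have cardG: "card (carrier (Gal R K M)) = card (carrier A) * card (carrier B)"
    using iso_same_card[OF iso] by (simp add: card_cartesian_product)
  have dimM: "dimension ((dim over K) M) K M" using finite_dimensionE[OF K gb(3)] .
  have posG: "card (carrier (Gal R K M)) \<ge> 1" using gb(4) dim_pos[OF K M dimM] by simp
  then have posA: "card (carrier A) \<ge> 1" and posB: "card (carrier B) \<ge> 1"
    using cardG by (auto simp: Suc_le_eq)
  note cL = galois_count[OF K M KM gal L KL LM]
  note cF = galois_count[OF K M KM gal F KF FM]
  have dL: "(dim over K) L = card (carrier A)"
  proof -
    have "(dim over K) L * card (carrier B) = card (carrier A) * card (carrier B)"
      using cL(3) gfB(2) ed(4) gb(4) cardG by (simp; metis)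
    moreover have "card (carrier B) \<noteq> 0" using posB by simp
    ultimately show ?thesis by (metis mult_right_cancel)
  qed
  have dF: "(dim over K) F = card (carrier B)"
  proof -
    have "(dim over K) F * card (carrier A) = card (carrier A) * card (carrier B)"
      using cF(3) gfA(2) ed(3) gb(4) cardG by (simp; metis mult.commute)
    then have "(dim over K) F * card (carrier A) = card (carrier B) * card (carrier A)"
      by (simp add: mult.commute)
    moreover have "card (carrier A) \<noteq> 0" using posA by simp
    ultimately show ?thesis by (metis mult_right_cancel)
  qed
  have FK: "F \<noteq> K"
  proof
    assume "F = K"
    then have "(dim over K) F = 1" using dimI[OF K dimension_one] K by simp
    then have "card (carrier B) = 1" using dF by simp
    then obtain b where "carrier B = {b}" using card_1_singletonE by blast
    moreover have "\<one>\<^bsub>B\<^esub> \<in> carrier B" using group.is_monoid[OF B] monoid.one_closed by blast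
    ultimately show False using nB by simp
  qed
  have TL: "galois_closure R K L = L"
  proof -
    have "L \<in> {N. galois R K N \<and> L \<subseteq> N}" using gL by simp
    then show ?thesis unfolding galois_closure_def by blast
  qed
  have fixK: "fixf M (carrier (Gal R K M)) = K" using fix_Gal_eq[OF K gal K subset_refl KM] .
  have LFK: "L \<inter> F \<subseteq> K"
  proof
    fix x assume x: "x \<in> L \<inter> F"
    have "s x = x" if s: "s \<in> carrier (Gal R K M)" for s
    proof -
      obtain a b where ab: "a \<in> HA" "b \<in> HB" "s = a \<otimes>\<^bsub>Gal R K M\<^esub> b" using ed(6)[OF s] by blast
      have aG: "a \<in> carrier (Gal R K M)" and bG: "b \<in> carrier (Gal R K M)" using ab HA_def HB_def by auto
      have xM: "x \<in> M" using x LM by blast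
      have "b x = x" using x ab(2) L_def by (auto simp: fixf_def)
      moreover have "a x = x" using x ab(1) F_def by (auto simp: fixf_def)
      ultimately show "s x = x" using Gal_apply_mult[OF aG bG xM] ab(3) by simp
    qed
    then have "x \<in> fixf M (carrier (Gal R K M))" using x LM by (auto simp: fixf_def)
    then show "x \<in> K" using fixK by simp
  qed
  have fixL: "fixf M (carrier (Gal R L M)) = L" using gfB(1) L_def by simp
  have Fst': "\<And>h x. h \<in> carrier (Gal R L M) \<Longrightarrow> x \<in> F \<Longrightarrow> h x \<in> F"
    using Fst Gal_mono[OF KL] by blast
  have ld: "lin_disjoint R K (galois_closure R K L) F"
    unfolding lin_disjoint_def TL
  proof (intro allI impI)
    fix us assume us: "set us \<subseteq> L \<and> independent K us"
    show "independent F us"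
    proof (rule lin_disj[OF K gal L KL LM F KF FM fixL])
      show "\<And>h x. h \<in> carrier (Gal R L M) \<Longrightarrow> x \<in> F \<Longrightarrow> h x \<in> F" by (rule Fst')
    qed (use LFK us in auto)
  qed
  define C where "C = generate_field R (L \<union> F)"
  have LFc: "L \<union> F \<subseteq> carrier R" using subfieldE(3)[OF L] subfieldE(3)[OF F] by blast
  have C: "subfield C R" using generate_field_is_subfield[OF LFc] C_def by simp
  have LFC: "L \<union> F \<subseteq> C" using generate_fieldE(2)[OF LFc C_def] .
  have CM: "C \<subseteq> M" using generate_field_min_subfield1[OF LFc M] LM FM C_def by blast
  have KC: "K \<subseteq> C" using KL LFC by blast
  note cC = galois_count[OF K M KM gal C KC CM]
  have "carrier (Gal R C M) \<subseteq> {\<one>\<^bsub>Gal R K M\<^esub>}"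
  proof
    fix s assume s: "s \<in> carrier (Gal R C M)"
    have sG: "s \<in> carrier (Gal R K M)" using s Gal_mono[OF KC] by blast
    have "s \<in> carrier (Gal R L M)" using s LFC by (auto simp: carrier_Gal)
    then have "s \<in> HB" using gfB(1) by simp
    moreover have "s \<in> carrier (Gal R F M)" using s LFC by (auto simp: carrier_Gal)
    then have "s \<in> HA" using gfA(1) by simp
    ultimately show "s \<in> {\<one>\<^bsub>Gal R K M\<^esub>}" using ed(5) by blast
  qed
  then have "card (carrier (Gal R C M)) \<le> 1" using card_mono[of "{\<one>\<^bsub>Gal R K M\<^esub>}"] by simp
  moreover have "(dim over C) M \<ge> 1" using dim_pos[OF C M finite_dimensionE[OF C cC(2)]] .
  ultimately have "(dim over C) M = 1" using cC(4) by simp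
  then have "dimension 1 C M" using finite_dimensionE[OF C cC(2)] by simp
  then have CMeq: "M = C" using dim_one_eq[OF C M CM] by simp
  have "strong_cluster_magnification_via R K L M F"
    unfolding strong_cluster_magnification_via_def
  proof (intro conjI)
    show "finite_ext R K L" using L KL cL(1) by (simp add: finite_ext_def)
    show "L \<subseteq> M" by (rule LM)
    show "degree_ext R K L > 2" using dL oA by (simp add: degree_ext_def over_def order_def)
    show "galois R K F" by (rule gF)
    show "lin_disjoint R K (galois_closure R K L) F" by (rule ld)
    show "compositum R L F = M" using CMeq C_def by (simp add: compositum_def)
  qed
  then show ?thesis using FK by (auto simp: nontrivial_strong_cluster_magnification_def)
qed

end

theorem corollary4p8:
  fixes R :: "'a ring" and K M :: "'a set"
  assumes "algebraic_closure R K"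
    and "perfect_subfield R K"
    and "galois R K M"
  shows "((\<exists>L. nontrivial_strong_cluster_magnification R K L M) \<longleftrightarrow>
           (\<exists>(A :: nat monoid) (B :: nat monoid). group A \<and> group B \<and>
              carrier A \<noteq> {\<one>\<^bsub>A\<^esub>} \<and> carrier B \<noteq> {\<one>\<^bsub>B\<^esub>} \<and> order A > 2 \<and>
              Gal R K M \<cong> A \<times>\<times> B))
         \<and> (\<forall>L. nontrivial_strong_cluster_magnification R K L M \<longrightarrow> galois R K L)"
proof -
  have fR: "field R" and K: "subfield K R"
    using assms(1) by (auto simp: algebraic_closure_def)
  interpret field R by (rule fR)
  show ?thesis
  proof (intro conjI allI impI iffI)
    assume "\<exists>L. nontrivial_strong_cluster_magnification R K L M"
    then obtain L F where "strong_cluster_magnification_via R K L M F" "F \<noteq> K"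
      by (auto simp: nontrivial_strong_cluster_magnification_def)
    then show "\<exists>(A :: nat monoid) (B :: nat monoid). group A \<and> group B \<and>
              carrier A \<noteq> {\<one>\<^bsub>A\<^esub>} \<and> carrier B \<noteq> {\<one>\<^bsub>B\<^esub>} \<and> order A > 2 \<and>
              Gal R K M \<cong> A \<times>\<times> B"
      using fwd(2)[OF K assms(3)] by blast
  next
    assume "\<exists>(A :: nat monoid) (B :: nat monoid). group A \<and> group B \<and>
              carrier A \<noteq> {\<one>\<^bsub>A\<^esub>} \<and> carrier B \<noteq> {\<one>\<^bsub>B\<^esub>} \<and> order A > 2 \<and>
              Gal R K M \<cong> A \<times>\<times> B"
    then show "\<exists>L. nontrivial_strong_cluster_magnification R K L M"
      using bwd[OF K assms(3)] by blast
  next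
    fix L assume "nontrivial_strong_cluster_magnification R K L M"
    then obtain F where "strong_cluster_magnification_via R K L M F" "F \<noteq> K"
      by (auto simp: nontrivial_strong_cluster_magnification_def)
    then show "galois R K L" using fwd(1)[OF K assms(3)] by blast
  qed
qed


end
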